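(* Let $W$ be a $\phi$-coordinated $V_{\widehat{\mathfrak{L}^*}}(\ell_{1234},0)$-module. Then $W$ is a restricted $\mathcal{L}^*$-module of level $\ell_{1234}$, on which $T_m(x)$ acts as $Y_W((T^m)_{-1}\mathbf{1},x)$ and $E_m(x)$ acts as $Y_W((E^m)_{-1}\mathbf{1},x)$ for all $m\in\mathbb{Z}$.
   Context: The rank two twisted Heisenberg–Virasoro algebra $\mathcal{L}^*$ has basis $\{t_1^mt_2^n, E_{m,n}: (m,n)\in\mathbb{Z}^2\setminus\{(0,0)\}\}\cup\{K_1,K_2,K_3,K_4\}$, $K_i$ central, with $[t_1^mt_2^n,t_1^rt_2^s]=0$, $[t_1^mt_2^n,E_{r,s}]=(nr-ms)t_1^{m+r}t_2^{n+s}+\delta_{m+r,0}\delta_{n+s,0}(mK_1+nK_2)$, $[E_{m,n},E_{r,s}]=(nr-ms)E_{m+r,n+s}+\delta_{m+r,0}\delta_{n+s,0}(mK_3+nK_4)$ (terms with index $(0,0)$ are interpreted as $0$). Set $T_m(x)=\sum_{n\in\mathbb{Z}}t_1^mt_2^nx^{-n}$ and $E_m(x)=\sum_nE_{m,n}x^{-n}$ (omitting $(0,0)$ terms). An $\mathcal{L}^*$-module $W$ is restricted if $T_m(x),E_m(x)\in\mathrm{Hom}(W,W((x)))$ for all $m$, i.e. for each $w$, $t_1^mt_2^nw=0$ and $E_{m,n}w=0$ for $n$ sufficiently large; it has level $\ell_{1234}$ if $K_i$ acts as $\ell_i\in\mathbb{C}$. $\widehat{\mathfrak{L}^*}$ is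 the Lie algebra with basis $\{T^m\otimes t^n, E^r\otimes t^s:(m,n),(r,s)\in\mathbb{Z}^2\}\cup\{K_1,\dots,K_4\}$, $K_i$ central, $[T^m\otimes t^n,T^r\otimes t^s]=0$, $[T^m\otimes t^n,E^r\otimes t^s]=(nr-ms)T^{m+r}\otimes t^{n+s-1}+m\delta_{m+r,0}\delta_{n+s+1,0}K_1+n\delta_{m+r,0}\delta_{n+s,0}K_2$, $[E^m\otimes t^n,E^r\otimes t^s]=(nr-ms)E^{m+r}\otimes t^{n+s-1}+m\delta_{m+r,0}\delta_{n+s+1,0}K_3+n\delta_{m+r,0}\delta_{n+s,0}K_4$. Write $(T^m)_n=T^m\otimes t^n$, $(E^r)_s=E^r\otimes t^s$. $V_{\widehat{\mathfrak{L}^*}}(\ell_{1234},0)=U(\widehat{\mathfrak{L}^*})\otimes_{U(\widehat{\mathfrak{L}^*}_{\ge0})}\mathbb{C}$, where $\widehat{\mathfrak{L}^*}_{\ge0}$ is spanned by $T^m\otimes t^n,E^r\otimes t^n$ ($n\ge0$) acting as $0$ and $K_i$ acting as $\ell_i$; $\mathbf{1}=1\otimes1$. It is a vertex algebra with vacuum $\mathbf{1}$, $Y((T^m)_{-1}\mathbf{1},x)=\sum_n(T^m)_nx^{-n-1}$, $Y((E^r)_{-1}\mathbf{1},x)=\sum_s(E^r)_sx^{-s-1}$, generated by $\{(T^m)_{-1}\mathbf{1},(E^r)_{-1}\mathbf{1}\}$. A $\phi$-coordinated module ($\phi(x,z)=xe^z$) for a vertex algebra $V$ is a space $W$ with a linear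 map $Y_W(\cdot,x):V\to\mathrm{Hom}(W,W((x)))$ such that $Y_W(\mathbf{1},x)=\mathbf{1}_W$ and for $u,v\in V$ there is $k\in\mathbb{N}$ with $(x_1-x_2)^kY_W(u,x_1)Y_W(v,x_2)\in\mathrm{Hom}(W,W((x_1,x_2)))$ and $(x_2e^z-x_2)^kY_W(Y(u,z)v,x_2)=((x_1-x_2)^kY_W(u,x_1)Y_W(v,x_2))|_{x_1=x_2e^z}$. *)

theory Defs
  imports Complex_Main "HOL-Library.Product_Lexorder"
begin

text \<open>A vertex operator Y(u,x) = sum_n u_n x^(-n-1) is encoded by its modes: Y u n v = u_n v.
Likewise Y_W(v,x) = sum_n v_n x^(-n-1) is encoded by YW v n w = v_n w.\<close>

section \<open>Vertex algebras (Borcherds identity form of the Jacobi identity)\<close>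

definition vertex_algebra ::
  "(complex \<Rightarrow> 'v::ab_group_add \<Rightarrow> 'v) \<Rightarrow> 'v \<Rightarrow> ('v \<Rightarrow> int \<Rightarrow> 'v \<Rightarrow> 'v) \<Rightarrow> bool" where
  "vertex_algebra sc vac Y \<longleftrightarrow>
     vector_space sc \<and>
     (\<forall>n v. Vector_Spaces.linear sc sc (\<lambda>u. Y u n v)) \<and>
     (\<forall>u n. Vector_Spaces.linear sc sc (Y u n)) \<and>
     (\<forall>u v. \<exists>N. \<forall>n\<ge>N. Y u n v = 0) \<and>
     (\<forall>n v. Y vac n v = (if n = -1 then v else 0)) \<and>
     (\<forall>u n. n \<ge> 0 \<longrightarrow> Y u n vac = 0) \<and>
     (\<forall>u. Y u (-1) vac = u) \<and>
     (\<forall>u v w l m n.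
        (\<Sum>i\<in>{i::nat. Y u (l + int i) v \<noteq> 0}.
            sc ((of_int m :: complex) gchoose i) (Y (Y u (l + int i) v) (m + n - int i) w))
        = (\<Sum>i\<in>{i::nat. Y v (n + int i) w \<noteq> 0}.
            sc ((-1) ^ i * ((of_int l :: complex) gchoose i)) (Y u (l + m - int i) (Y v (n + int i) w)))
        - (\<Sum>i\<in>{i::nat. Y u (m + int i) w \<noteq> 0}.
            sc ((-1) ^ i * ((of_int l :: complex) gchoose i) * ((-1) powi l))
               (Y v (l + n - int i) (Y u (m + int i) w))))"

text \<open>T m n is the action of T^m \<otimes> t^n, E m n that of E^m \<otimes> t^n; K_i acts as l_i.\<close>

definition Lhat_module ::
  "(complex \<Rightarrow> 'v::ab_group_add \<Rightarrow> 'v) \<Rightarrow> (int \<Rightarrow> int \<Rightarrow> 'v \<Rightarrow> 'v) \<Rightarrow> (int \<Rightarrow> int \<Rightarrow> 'v \<Rightarrow> 'v)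
   \<Rightarrow> complex \<Rightarrow> complex \<Rightarrow> complex \<Rightarrow> complex \<Rightarrow> bool" where
  "Lhat_module sc T E l1 l2 l3 l4 \<longleftrightarrow>
     (\<forall>m n. Vector_Spaces.linear sc sc (T m n) \<and> Vector_Spaces.linear sc sc (E m n)) \<and>
     (\<forall>m n r s x. T m n (T r s x) - T r s (T m n x) = 0) \<and>
     (\<forall>m n r s x. T m n (E r s x) - E r s (T m n x) =
        sc (of_int (n * r - m * s)) (T (m + r) (n + s - 1) x)
        + sc ((if m + r = 0 \<and> n + s + 1 = 0 then of_int m * l1 else 0)
              + (if m + r = 0 \<and> n + s = 0 then of_int n * l2 else 0)) x) \<and>
     (\<forall>m n r s x. E m n (E r s x) - E r s (E m n x) =
        sc (of_int (n * r - m * s)) (E (m + r) (n + s - 1) x)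
        + sc ((if m + r = 0 \<and> n + s + 1 = 0 then of_int m * l3 else 0)
              + (if m + r = 0 \<and> n + s = 0 then of_int n * l4 else 0)) x)"

text \<open>PBW description of the induced module: the generators of the negative part are
indexed by keys (b,m,n) with n<0 (b = False for T^m \<otimes> t^n, b = True for E^m \<otimes> t^n);
ordered (lexicographically sorted) monomials applied to the vacuum form a basis.\<close>

definition gen_op :: "(int \<Rightarrow> int \<Rightarrow> 'v \<Rightarrow> 'v) \<Rightarrow> (int \<Rightarrow> int \<Rightarrow> 'v \<Rightarrow> 'v) \<Rightarrow> bool \<times> int \<times> int \<Rightarrow> 'v \<Rightarrow> 'v" where
  "gen_op T E k = (case k of (b, m, n) \<Rightarrow> if b then E m n else T m n)"

definition pbw_vec :: "(int \<Rightarrow> int \<Rightarrow> 'v \<Rightarrow> 'v) \<Rightarrow> (int \<Rightarrow> int \<Rightarrow> 'v \<Rightarrow> 'v) \<Rightarrow> 'v \<Rightarrow> (bool \<times> int \<times> int) list \<Rightarrow> 'v" where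
  "pbw_vec T E vac ks = foldr (gen_op T E) ks vac"

definition pbw_index :: "(bool \<times> int \<times> int) list set" where
  "pbw_index = {ks. sorted ks \<and> (\<forall>k\<in>set ks. snd (snd k) < 0)}"

definition induced_from_vacuum ::
  "(complex \<Rightarrow> 'v::ab_group_add \<Rightarrow> 'v) \<Rightarrow> (int \<Rightarrow> int \<Rightarrow> 'v \<Rightarrow> 'v) \<Rightarrow> (int \<Rightarrow> int \<Rightarrow> 'v \<Rightarrow> 'v) \<Rightarrow> 'v \<Rightarrow> bool" where
  "induced_from_vacuum sc T E vac \<longleftrightarrow>
     (\<forall>m n. n \<ge> 0 \<longrightarrow> T m n vac = 0 \<and> E m n vac = 0) \<and>
     inj_on (pbw_vec T E vac) pbw_index \<and>
     \<not> module.dependent sc (pbw_vec T E vac ` pbw_index) \<and>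
     module.span sc (pbw_vec T E vac ` pbw_index) = UNIV"

definition is_VLhat ::
  "(complex \<Rightarrow> 'v::ab_group_add \<Rightarrow> 'v) \<Rightarrow> 'v \<Rightarrow> ('v \<Rightarrow> int \<Rightarrow> 'v \<Rightarrow> 'v)
   \<Rightarrow> (int \<Rightarrow> int \<Rightarrow> 'v \<Rightarrow> 'v) \<Rightarrow> (int \<Rightarrow> int \<Rightarrow> 'v \<Rightarrow> 'v)
   \<Rightarrow> complex \<Rightarrow> complex \<Rightarrow> complex \<Rightarrow> complex \<Rightarrow> bool" where
  "is_VLhat sc vac Y T E l1 l2 l3 l4 \<longleftrightarrow>
     vertex_algebra sc vac Y \<and>
     Lhat_module sc T E l1 l2 l3 l4 \<and>
     induced_from_vacuum sc T E vac \<and>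
     (\<forall>m n. Y (T m (-1) vac) n = T m n) \<and>
     (\<forall>m n. Y (E m (-1) vac) n = E m n)"

section \<open>phi-coordinated modules, phi(x,z) = x e^z\<close>

text \<open>Coefficient of x1^i x2^j in (x1 - x2)^k Y_W(u,x1) Y_W(v,x2) w.\<close>
definition prod_coeff ::
  "(complex \<Rightarrow> 'w::ab_group_add \<Rightarrow> 'w) \<Rightarrow> ('v \<Rightarrow> int \<Rightarrow> 'w \<Rightarrow> 'w) \<Rightarrow> 'v \<Rightarrow> 'v \<Rightarrow> nat \<Rightarrow> 'w \<Rightarrow> int \<Rightarrow> int \<Rightarrow> 'w" where
  "prod_coeff scW YW u v k w i j =
     (\<Sum>p\<in>{0..k}. scW (of_nat (k choose p) * (-1) ^ p)
        (YW u (int k - int p - i - 1) (YW v (int p - j - 1) w)))"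

text \<open>Coefficient of x2^q z^p in ((x1 - x2)^k Y_W(u,x1) Y_W(v,x2) w) evaluated at x1 = x2 e^z
(meaningful when the product lies in W((x1,x2))).\<close>
definition subst_coeff ::
  "(complex \<Rightarrow> 'w::ab_group_add \<Rightarrow> 'w) \<Rightarrow> ('v \<Rightarrow> int \<Rightarrow> 'w \<Rightarrow> 'w) \<Rightarrow> 'v \<Rightarrow> 'v \<Rightarrow> nat \<Rightarrow> 'w \<Rightarrow> int \<Rightarrow> int \<Rightarrow> 'w" where
  "subst_coeff scW YW u v k w q p =
     (if p < 0 then 0 else
      (\<Sum>i\<in>{i. prod_coeff scW YW u v k w i (q - i) \<noteq> 0}.
         scW ((of_int i :: complex) ^ nat p / fact (nat p)) (prod_coeff scW YW u v k w i (q - i))))"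

text \<open>Coefficient of x2^q z^p in (x2 e^z - x2)^k Y_W(Y(u,z)v, x2) w, using
(x2 e^z - x2)^k = x2^k sum_j (k choose j) (-1)^(k-j) e^(j z).\<close>
definition assoc_coeff ::
  "(complex \<Rightarrow> 'w::ab_group_add \<Rightarrow> 'w) \<Rightarrow> ('v::zero \<Rightarrow> int \<Rightarrow> 'v \<Rightarrow> 'v) \<Rightarrow> ('v \<Rightarrow> int \<Rightarrow> 'w \<Rightarrow> 'w)
    \<Rightarrow> 'v \<Rightarrow> 'v \<Rightarrow> nat \<Rightarrow> 'w \<Rightarrow> int \<Rightarrow> int \<Rightarrow> 'w" where
  "assoc_coeff scW Y YW u v k w q p =
     (\<Sum>j\<in>{0..k}. \<Sum>r\<in>{r::nat. Y u (int r - p - 1) v \<noteq> 0}.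
        scW (of_nat (k choose j) * (-1) ^ (k - j) * of_nat j ^ r / fact r)
            (YW (Y u (int r - p - 1) v) (int k - q - 1) w))"

definition phi_coord_module ::
  "(complex \<Rightarrow> 'v::ab_group_add \<Rightarrow> 'v) \<Rightarrow> 'v \<Rightarrow> ('v \<Rightarrow> int \<Rightarrow> 'v \<Rightarrow> 'v)
   \<Rightarrow> (complex \<Rightarrow> 'w::ab_group_add \<Rightarrow> 'w) \<Rightarrow> ('v \<Rightarrow> int \<Rightarrow> 'w \<Rightarrow> 'w) \<Rightarrow> bool" where
  "phi_coord_module scV vac Y scW YW \<longleftrightarrow>
     vector_space scW \<and>
     (\<forall>n w. Vector_Spaces.linear scV scW (\<lambda>v. YW v n w)) \<and>
     (\<forall>v n. Vector_Spaces.linear scW scW (YW v n)) \<and>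
     (\<forall>v w. \<exists>N. \<forall>n\<ge>N. YW v n w = 0) \<and>
     (\<forall>n w. YW vac n w = (if n = -1 then w else 0)) \<and>
     (\<forall>u v. \<exists>k::nat.
        (\<forall>w. \<exists>A B. \<forall>i j. i < A \<or> j < B \<longrightarrow> prod_coeff scW YW u v k w i j = 0) \<and>
        (\<forall>w q p. assoc_coeff scW Y YW u v k w q p = subst_coeff scW YW u v k w q p))"

text \<open>t m n is the action of t_1^m t_2^n, e m n that of E_{m,n}, for (m,n) \<noteq> (0,0)
(values at (0,0) are irrelevant); K_i acts as l_i; terms with index (0,0) are 0.\<close>

definition Lstar_module ::
  "(complex \<Rightarrow> 'w::ab_group_add \<Rightarrow> 'w) \<Rightarrow> (int \<Rightarrow> int \<Rightarrow> 'w \<Rightarrow> 'w) \<Rightarrow> (int \<Rightarrow> int \<Rightarrow> 'w \<Rightarrow> 'w)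
   \<Rightarrow> complex \<Rightarrow> complex \<Rightarrow> complex \<Rightarrow> complex \<Rightarrow> bool" where
  "Lstar_module sc t e l1 l2 l3 l4 \<longleftrightarrow>
     (\<forall>m n. (m, n) \<noteq> (0, 0) \<longrightarrow>
        Vector_Spaces.linear sc sc (t m n) \<and> Vector_Spaces.linear sc sc (e m n)) \<and>
     (\<forall>m n r s x. (m, n) \<noteq> (0, 0) \<longrightarrow> (r, s) \<noteq> (0, 0) \<longrightarrow>
        t m n (t r s x) - t r s (t m n x) = 0) \<and>
     (\<forall>m n r s x. (m, n) \<noteq> (0, 0) \<longrightarrow> (r, s) \<noteq> (0, 0) \<longrightarrow>
        t m n (e r s x) - e r s (t m n x) =
          sc (of_int (n * r - m * s)) (if (m + r, n + s) = (0, 0) then 0 else t (m + r) (n + s) x)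
          + (if (m + r, n + s) = (0, 0) then sc (of_int m * l1 + of_int n * l2) x else 0)) \<and>
     (\<forall>m n r s x. (m, n) \<noteq> (0, 0) \<longrightarrow> (r, s) \<noteq> (0, 0) \<longrightarrow>
        e m n (e r s x) - e r s (e m n x) =
          sc (of_int (n * r - m * s)) (if (m + r, n + s) = (0, 0) then 0 else e (m + r) (n + s) x)
          + (if (m + r, n + s) = (0, 0) then sc (of_int m * l3 + of_int n * l4) x else 0))"

definition Lstar_restricted :: "(int \<Rightarrow> int \<Rightarrow> 'w::zero \<Rightarrow> 'w) \<Rightarrow> (int \<Rightarrow> int \<Rightarrow> 'w \<Rightarrow> 'w) \<Rightarrow> bool" where
  "Lstar_restricted t e \<longleftrightarrow>
     (\<forall>m w. \<exists>N. \<forall>n\<ge>N. (m, n) \<noteq> (0, 0) \<longrightarrow> t m n w = 0 \<and> e m n w = 0)"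

end

theory Submission
  imports Defs "HOL-Computational_Algebra.Polynomial"
begin

lemma fd_Suc:
  fixes f :: "nat \<Rightarrow> complex"
  shows "(\<Sum>l\<le>Suc k. of_nat (Suc k choose l) * (-1)^(Suc k - l) * f l)
       = (\<Sum>l\<le>k. of_nat (k choose l) * (-1)^(k-l) * (f (Suc l) - f l))"
proof -
  have A: "(\<Sum>l\<le>k. of_nat (k choose l) * (-1)^(k-l) * f (Suc l))
     = (\<Sum>l\<le>Suc k. (if l = 0 then 0 else of_nat (k choose (l - 1)) * (-1)^(Suc k - l) * f l))"
    by (subst sum.atMost_Suc_shift) simp
  have B: "(\<Sum>l\<le>k. of_nat (k choose l) * (-1)^(k-l) * f l)
     = - (\<Sum>l\<le>Suc k. of_nat (k choose l) * (-1)^(Suc k - l) * f l)"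
    by (simp add: sum.atMost_Suc sum_negf[symmetric] Suc_diff_le)
  have C: "(\<Sum>l\<le>Suc k. of_nat (Suc k choose l) * (-1)^(Suc k - l) * f l)
     = (\<Sum>l\<le>Suc k. of_nat (k choose l) * (-1)^(Suc k - l) * f l)
       + (\<Sum>l\<le>Suc k. (if l = 0 then 0 else of_nat (k choose (l - 1)) * (-1)^(Suc k - l) * f l))"
  proof -
    have "\<And>l. of_nat (Suc k choose l) * (-1)^(Suc k - l) * f l
        = of_nat (k choose l) * (-1)^(Suc k - l) * f l
          + (if l = 0 then 0 else of_nat (k choose (l - 1)) * (-1)^(Suc k - l) * (f l :: complex))"
    proof -
      fix l show "?thesis l"
        by (cases l) (auto simp: distrib_right)
    qed
    then show ?thesis by (simp add: sum.distrib)
  qed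
  show ?thesis using A B C by (simp add: algebra_simps sum_subtractf)
qed

definition Dk :: "nat \<Rightarrow> nat \<Rightarrow> complex" where
  "Dk k r = (\<Sum>l\<le>k. of_nat (k choose l) * (-1)^(k-l) * of_nat l ^ r)"

lemma Dk_Suc: "Dk (Suc k) r = (\<Sum>t<r. of_nat (r choose t) * Dk k t)"
proof -
  have e: "\<And>l. ((1 + of_nat l) ^ r - of_nat l ^ r :: complex) = (\<Sum>t<r. of_nat (r choose t) * of_nat l ^ t)"
  proof -
    fix l
    have "(1 + of_nat l :: complex) ^ r = (of_nat l + 1) ^ r" by (simp add: add.commute)
    also have "\<dots> = (\<Sum>t\<le>r. of_nat (r choose t) * of_nat l ^ t * 1 ^ (r - t))"
      by (rule binomial_ring)
    also have "\<dots> = (\<Sum>t\<le>r. of_nat (r choose t) * of_nat l ^ t)"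
      by simp
    also have "\<dots> = (\<Sum>t<r. of_nat (r choose t) * of_nat l ^ t) + of_nat l ^ r"
      by (simp add: lessThan_Suc_atMost[symmetric])
    finally show "?thesis l" by simp
  qed
  have "Dk (Suc k) r = (\<Sum>l\<le>k. of_nat (k choose l) * (-1)^(k-l) * (of_nat (Suc l) ^ r - of_nat l ^ r))"
    unfolding Dk_def by (rule fd_Suc)
  also have "\<dots> = (\<Sum>l\<le>k. \<Sum>t<r. of_nat (k choose l) * (-1)^(k-l) * (of_nat (r choose t) * of_nat l ^ t))"
    by (simp add: e sum_distrib_left)
  also have "\<dots> = (\<Sum>t<r. of_nat (r choose t) * Dk k t)"
    unfolding Dk_def by (subst sum.swap) (simp add: sum_distrib_left algebra_simps)
  finally show ?thesis .
qed

lemma Dk_facts: "(\<forall>r<k. Dk k r = 0) \<and> Dk k k = fact k \<and> Dk k (Suc k) = fact (Suc k) * of_nat k / 2"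
proof (induction k)
  case 0
  then show ?case by (simp add: Dk_def)
next
  case (Suc k)
  then have z: "\<And>t. t < k \<Longrightarrow> Dk k t = 0" and kk: "Dk k k = fact k"
    and k1: "Dk k (Suc k) = fact (Suc k) * of_nat k / 2" by auto
  have 1: "\<forall>r<Suc k. Dk (Suc k) r = 0"
    by (auto simp: Dk_Suc z)
  have 2: "Dk (Suc k) (Suc k) = fact (Suc k)"
  proof -
    have "Dk (Suc k) (Suc k) = (\<Sum>t<Suc k. of_nat (Suc k choose t) * Dk k t)" by (rule Dk_Suc)
    also have "\<dots> = of_nat (Suc k choose k) * Dk k k"
      by (simp add: lessThan_Suc z)
    finally show ?thesis by (simp add: kk)
  qed
  have 3: "Dk (Suc k) (Suc (Suc k)) = fact (Suc (Suc k)) * of_nat (Suc k) / 2"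
  proof -
    have "Dk (Suc k) (Suc (Suc k)) = (\<Sum>t<Suc (Suc k). of_nat (Suc (Suc k) choose t) * Dk k t)" by (rule Dk_Suc)
    also have "\<dots> = of_nat (Suc (Suc k) choose k) * Dk k k + of_nat (Suc (Suc k) choose Suc k) * Dk k (Suc k)"
      by (simp add: lessThan_Suc z)
    also have "of_nat (Suc (Suc k) choose k) = (of_nat (Suc (Suc k)) * of_nat (Suc k) / 2 :: complex)"
    proof -
      have "\<And>k. 2 * (Suc (Suc k) choose k) = Suc (Suc k) * Suc k"
      proof -
        fix k show "2 * (Suc (Suc k) choose k) = Suc (Suc k) * Suc k"
          by (induction k) (simp_all add: binomial_Suc_n)
      qed
      from this[of k] have "2 * of_nat (Suc (Suc k) choose k) = (of_nat (Suc (Suc k) * Suc k) :: complex)"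
        by (metis of_nat_mult of_nat_numeral)
      then show ?thesis by (simp add: field_simps)
    qed
    also have "of_nat (Suc (Suc k) choose Suc k) = (of_nat (Suc (Suc k)) :: complex)"
      by (simp add: binomial_Suc_n)
    finally have X: "Dk (Suc k) (Suc (Suc k)) = of_nat (Suc (Suc k)) * of_nat (Suc k) / 2 * fact k
       + of_nat (Suc (Suc k)) * (fact (Suc k) * of_nat k / 2)" by (simp add: kk k1)
    have "fact (Suc (Suc k)) = (of_nat (Suc (Suc k)) * (of_nat (Suc k) * fact k) :: complex)"
      by (simp add: fact_Suc)
    moreover have "fact (Suc k) = (of_nat (Suc k) * fact k :: complex)"
      by (simp add: fact_Suc)
    ultimately show ?thesis unfolding X by (simp add: field_simps)
  qed
  show ?case using 1 2 3 by blast
qed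

definition FF :: "nat \<Rightarrow> (int \<Rightarrow> int \<Rightarrow> complex) \<Rightarrow> int \<Rightarrow> int \<Rightarrow> complex" where
  "FF k P i j = (\<Sum>p\<le>k. of_nat (k choose p) * (-1)^p * P (i - int k + int p) (j - int p))"

lemma FF_Suc: "FF (Suc k) P i j = FF k P (i - 1) j - FF k P i (j - 1)"
proof -
  define g where "g p = P (i - int (Suc k) + int p) (j - int p)" for p
  have A: "FF k P (i - 1) j = (\<Sum>p\<le>Suc k. of_nat (k choose p) * (-1)^p * g p)"
    by (simp add: FF_def g_def sum.atMost_Suc algebra_simps)
  have B: "FF k P i (j - 1) = - (\<Sum>p\<le>Suc k. (if p = 0 then 0 else of_nat (k choose (p - 1)) * (-1)^p * g p))"
    by (subst sum.atMost_Suc_shift) (simp add: FF_def g_def sum_negf[symmetric] algebra_simps)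
  have C: "FF (Suc k) P i j = (\<Sum>p\<le>Suc k. of_nat (k choose p) * (-1)^p * g p)
       + (\<Sum>p\<le>Suc k. (if p = 0 then 0 else of_nat (k choose (p - 1)) * (-1)^p * g p))"
  proof -
    have "\<And>p. of_nat (Suc k choose p) * (-1)^p * g p
        = of_nat (k choose p) * (-1)^p * g p
          + (if p = 0 then 0 else of_nat (k choose (p - 1)) * (-1)^p * g p)"
    proof -
      fix p show "?thesis p"
        by (cases p) (auto simp: algebra_simps)
    qed
    then have "(\<Sum>p\<le>Suc k. of_nat (Suc k choose p) * (-1)^p * g p) = (\<Sum>p\<le>Suc k. of_nat (k choose p) * (-1)^p * g p
          + (if p = 0 then 0 else of_nat (k choose (p - 1)) * (-1)^p * g p))"
      by (intro sum.cong) auto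
    moreover have "FF (Suc k) P i j = (\<Sum>p\<le>Suc k. of_nat (Suc k choose p) * (-1)^p * g p)"
      unfolding FF_def g_def ..
    ultimately show ?thesis by (simp only: sum.distrib)
  qed
  show ?thesis using A B C by simp
qed

lemma FF_trunc2:
  assumes "\<And>i j. j < B \<Longrightarrow> P i j = 0" "j < B"
  shows "FF k P i j = 0"
  unfolding FF_def using assms by (intro sum.neutral) auto

lemma INV_aux:
  assumes trunc: "\<And>i j. j < B \<Longrightarrow> P i j = 0"
  shows "(\<Sum>n\<le>nat (j - B). of_nat ((n + k - 1) choose n) * FF k P (i + int k + int n) (j - int n)) = P i j"
proof (induction k arbitrary: i j)
  case 0
  have "(\<Sum>n\<le>nat (j - B). of_nat ((n + 0 - 1) choose n) * FF 0 P (i + int 0 + int n) (j - int n))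
      = (\<Sum>n\<in>{0}. of_nat ((n + 0 - 1) choose n) * FF 0 P (i + int 0 + int n) (j - int n))"
    by (rule sum.mono_neutral_right) auto
  then show ?case by (simp add: FF_def)
next
  case (Suc k)
  define M where "M = nat (j - B)"
  define F where "F = FF k P"
  have Fz: "F a b = 0" if "b < B" for a b
    unfolding F_def by (rule FF_trunc2[OF trunc that])
  have "(\<Sum>n\<le>M. of_nat ((n + Suc k - 1) choose n) * FF (Suc k) P (i + int (Suc k) + int n) (j - int n))
     = (\<Sum>n\<le>M. of_nat ((n + k) choose n) * F (i + int k + int n) (j - int n))
       - (\<Sum>n\<le>M. of_nat ((n + k) choose n) * F (i + int k + int (Suc n)) (j - int (Suc n)))"
    by (simp add: FF_Suc F_def[symmetric] sum_subtractf[symmetric] algebra_simps)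
  also have "(\<Sum>n\<le>M. of_nat ((n + k) choose n) * F (i + int k + int (Suc n)) (j - int (Suc n)))
     = (\<Sum>n\<le>Suc M. (if n = 0 then 0 else of_nat ((n + k - 1) choose (n - 1)) * F (i + int k + int n) (j - int n)))"
    by (subst sum.atMost_Suc_shift) simp
  also have "\<dots> = (\<Sum>n\<le>M. (if n = 0 then 0 else of_nat ((n + k - 1) choose (n - 1)) * F (i + int k + int n) (j - int n)))"
    using Fz[of "j - int (Suc M)"] by (simp add: sum.atMost_Suc M_def)
  also have "(\<Sum>n\<le>M. of_nat ((n + k) choose n) * F (i + int k + int n) (j - int n))
      - (\<Sum>n\<le>M. (if n = 0 then 0 else of_nat ((n + k - 1) choose (n - 1)) * F (i + int k + int n) (j - int n)))
     = (\<Sum>n\<le>M. of_nat ((n + k - 1) choose n) * F (i + int k + int n) (j - int n))"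
  proof -
    have "\<And>n. of_nat ((n + k) choose n) * F (i + int k + int n) (j - int n)
       - (if n = 0 then 0 else of_nat ((n + k - 1) choose (n - 1)) * F (i + int k + int n) (j - int n))
       = of_nat ((n + k - 1) choose n) * F (i + int k + int n) (j - int n)"
    proof -
      fix n show "?thesis n"
      proof (cases n)
        case 0 then show ?thesis by simp
      next
        case (Suc n')
        then have "((n + k) choose n) = ((n + k - 1) choose n) + ((n + k - 1) choose (n - 1))"
          using binomial_Suc_Suc[of "n' + k" n'] by simp
        then show ?thesis using Suc by (simp add: algebra_simps)
      qed
    qed
    then show ?thesis by (simp add: sum_subtractf[symmetric])
  qed
  also have "\<dots> = P i j" using Suc.IH unfolding F_def M_def .
  finally show ?case unfolding M_def .
qed

lemma INV:
  assumes trunc: "\<And>i j. j < B \<Longrightarrow> P i j = 0" and M: "j - B \<le> int M"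
  shows "P i j = (\<Sum>n\<le>M. of_nat ((n + k - 1) choose n) * FF k P (i + int k + int n) (j - int n))"
proof -
  have "(\<Sum>n\<le>M. of_nat ((n + k - 1) choose n) * FF k P (i + int k + int n) (j - int n))
      = (\<Sum>n\<le>nat (j - B). of_nat ((n + k - 1) choose n) * FF k P (i + int k + int n) (j - int n))"
    using M by (intro sum.mono_neutral_right) (auto intro!: FF_trunc2[OF trunc])
  then show ?thesis using INV_aux[OF trunc] by simp
qed

lemma kernel_val:
  assumes k: "1 \<le> k"
  shows "(of_int (x - i - 1) gchoose (k - 1) :: complex)
     = (if i + int k \<le> x then of_nat (nat (x - i - 1) choose (k - 1))
        else if x \<le> i then - ((-1)^k * of_nat ((nat (i - x) + k - 1) choose (k - 1))) else 0)"
proof (cases "i + int k \<le> x")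
  case True
  then have "0 \<le> x - i - 1" using k by linarith
  then have "of_int (x - i - 1) = (of_nat (nat (x - i - 1)) :: complex)" by (metis of_nat_nat)
  then show ?thesis using True by (simp add: binomial_gbinomial)
next
  case F: False
  show ?thesis
  proof (cases "x \<le> i")
    case True
    have "(of_int (x - i - 1) gchoose (k - 1) :: complex)
        = (-1)^(k-1) * ((of_nat (k - 1) - of_int (x - i - 1) - 1) gchoose (k - 1))"
      by (rule gbinomial_negated_upper)
    also have "(of_nat (k - 1) - of_int (x - i - 1) - 1 :: complex) = of_nat (nat (i - x) + k - 1)"
      using True k by (simp add: of_nat_diff)
    also have "(-1)^(k-1) = - ((-1)^k :: complex)"
      using k by (cases k) auto
    finally show ?thesis using True F by (simp add: binomial_gbinomial)
  next
    case False
    then have "0 \<le> x - i - 1" using F by linarith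
    then have eq: "of_int (x - i - 1) = (of_nat (nat (x - i - 1)) :: complex)" by (metis of_nat_nat)
    have lt: "nat (x - i - 1) < k - 1" using F False by linarith
    have "(of_int (x - i - 1) gchoose (k - 1) :: complex) = 0"
      unfolding eq binomial_gbinomial[symmetric] using lt by simp
    then show ?thesis using F False by simp
  qed
qed

lemma sum_int_up: "a \<le> b \<Longrightarrow> (\<Sum>x\<in>{a..b}. f x) = (\<Sum>n\<le>nat (b - a). f (a + int n))"
  by (rule sum.reindex_bij_witness[of _ "\<lambda>n. a + int n" "\<lambda>x. nat (x - a)"]) auto

lemma sum_int_down: "a \<le> b \<Longrightarrow> (\<Sum>x\<in>{a..b}. f x) = (\<Sum>n\<le>nat (b - a). f (b - int n))"
  by (rule sum.reindex_bij_witness[of _ "\<lambda>n. b - int n" "\<lambda>x. nat (b - x)"]) auto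

lemma KERNEL:
  fixes P1 P2 :: "int \<Rightarrow> int \<Rightarrow> complex"
  assumes k: "1 \<le> k"
    and t1: "\<And>i j. j < B \<Longrightarrow> P1 i j = 0"
    and t2: "\<And>i j. j < B \<Longrightarrow> P2 i j = 0"
    and loc: "\<And>i j. FF k P1 i j = (-1)^k * FF k P2 j i"
    and L: "L \<le> B" "L \<le> i" and U: "i + j + int k - B \<le> U" "i + int k \<le> U"
  shows "P1 i j - P2 j i = (\<Sum>x\<in>{L..U}. FF k P1 x (i + j + int k - x) * (of_int (x - i - 1) gchoose (k - 1)))"
proof -
  define F where "F = FF k P1"
  define q where "q = i + j + int k"
  have c1: "of_nat ((n + k - 1) choose n) = (of_nat ((n + k - 1) choose (k - 1)) :: complex)" for n
    using k by (metis add_diff_assoc add_diff_cancel_left' binomial_symmetric le_add1)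
  have "P1 i j = (\<Sum>n\<le>nat (U - (i + int k)). of_nat ((n + k - 1) choose n) * FF k P1 (i + int k + int n) (j - int n))"
    by (rule INV[where B=B, OF t1]) (use U in \<open>auto simp: nat_diff_distrib\<close>)
  also have "\<dots> = (\<Sum>n\<le>nat (U - (i + int k)). of_nat (nat ((i + int k + int n) - i - 1) choose (k - 1)) * F (i + int k + int n) (q - (i + int k + int n)))"
  proof (intro sum.cong refl)
    fix n
    have "nat ((i + int k + int n) - i - 1) = n + k - 1" using k by linarith
    moreover have "q - (i + int k + int n) = j - int n" unfolding q_def by simp
    ultimately show "of_nat ((n + k - 1) choose n) * FF k P1 (i + int k + int n) (j - int n) =
         of_nat (nat ((i + int k + int n) - i - 1) choose (k - 1)) * F (i + int k + int n) (q - (i + int k + int n))"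
      by (simp only: c1 F_def)
  qed
  also have "\<dots> = (\<Sum>x\<in>{i + int k..U}. of_nat (nat (x - i - 1) choose (k - 1)) * F x (q - x))"
    by (rule sum_int_up[symmetric]) (use U in linarith)
  finally have E1: "P1 i j = \<dots>" .
  have "P2 j i = (\<Sum>n\<le>nat (i - L). of_nat ((n + k - 1) choose n) * FF k P2 (j + int k + int n) (i - int n))"
    by (rule INV[where B=B, OF t2]) (use L in \<open>auto\<close>)
  also have "\<dots> = (\<Sum>n\<le>nat (i - L). (-1)^k * (of_nat ((n + k - 1) choose n) * F (i - int n) (j + int k + int n)))"
  proof (rule sum.cong)
    fix n
    have "F (i - int n) (j + int k + int n) = (-1)^k * FF k P2 (j + int k + int n) (i - int n)"
      unfolding F_def by (rule loc)
    then have "(-1)^k * F (i - int n) (j + int k + int n) = FF k P2 (j + int k + int n) (i - int n)"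
      by (simp add: power_mult_distrib[symmetric])
    then show "of_nat ((n + k - 1) choose n) * FF k P2 (j + int k + int n) (i - int n)
       = (-1)^k * (of_nat ((n + k - 1) choose n) * F (i - int n) (j + int k + int n))"
      by (simp add: algebra_simps)
  qed simp
  also have "\<dots> = (\<Sum>n\<le>nat (i - L). (-1)^k * (of_nat ((nat (i - (i - int n)) + k - 1) choose (k - 1)) * F (i - int n) (q - (i - int n))))"
  proof (intro sum.cong refl)
    fix n
    have "nat (i - (i - int n)) = n" by simp
    moreover have "q - (i - int n) = j + int k + int n" unfolding q_def by simp
    ultimately show "(-1)^k * (of_nat ((n + k - 1) choose n) * F (i - int n) (j + int k + int n)) =
        (-1)^k * (of_nat ((nat (i - (i - int n)) + k - 1) choose (k - 1)) * F (i - int n) (q - (i - int n)))"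
      by (simp only: c1)
  qed
  also have "\<dots> = (\<Sum>x\<in>{L..i}. (-1)^k * (of_nat ((nat (i - x) + k - 1) choose (k - 1)) * F x (q - x)))"
    by (rule sum_int_down[symmetric]) (use L in linarith)
  finally have E2: "P2 j i = \<dots>" .
  have "(\<Sum>x\<in>{L..U}. F x (q - x) * (of_int (x - i - 1) gchoose (k - 1)))
     = (\<Sum>x\<in>{L..U}. (if i + int k \<le> x then of_nat (nat (x - i - 1) choose (k - 1)) * F x (q - x) else 0)
        - (if x \<le> i then (-1)^k * (of_nat ((nat (i - x) + k - 1) choose (k - 1)) * F x (q - x)) else 0))"
  proof (intro sum.cong refl)
    fix x
    show "F x (q - x) * (of_int (x - i - 1) gchoose (k - 1)) =
      (if i + int k \<le> x then of_nat (nat (x - i - 1) choose (k - 1)) * F x (q - x) else 0)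
        - (if x \<le> i then (-1)^k * (of_nat ((nat (i - x) + k - 1) choose (k - 1)) * F x (q - x)) else 0)"
      unfolding kernel_val[OF k] using k by (auto simp: algebra_simps)
  qed
  also have "\<dots> = (\<Sum>x\<in>{i + int k..U}. of_nat (nat (x - i - 1) choose (k - 1)) * F x (q - x))
      - (\<Sum>x\<in>{L..i}. (-1)^k * (of_nat ((nat (i - x) + k - 1) choose (k - 1)) * F x (q - x)))"
  proof -
    have s1: "{x \<in> {L..U}. i + int k \<le> x} = {i + int k..U}" using L k by auto
    have s2: "{x \<in> {L..U}. x \<le> i} = {L..i}" using U k by auto
    show ?thesis
      unfolding sum_subtractf sum.inter_filter[OF finite_atLeastAtMost_int, symmetric] s1 s2 ..
  qed
  also have "\<dots> = P1 i j - P2 j i" using E1 E2 by simp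
  finally show ?thesis unfolding F_def q_def by simp
qed

lemma poly_sum_upto:
  fixes h :: "complex poly"
  assumes "degree h \<le> N"
  shows "poly h x = (\<Sum>t\<le>N. coeff h t * x ^ t)"
proof -
  have "poly h x = (\<Sum>t\<le>degree h. coeff h t * x ^ t)" by (rule poly_altdef)
  also have "\<dots> = (\<Sum>t\<le>N. coeff h t * x ^ t)"
    using assms by (intro sum.mono_neutral_left) (auto simp: coeff_eq_0)
  finally show ?thesis .
qed

lemma POLY:
  fixes h :: "complex poly" and f :: "int \<Rightarrow> complex"
  assumes "degree h \<le> N"
  shows "(\<Sum>i\<in>I. f i * poly h (of_int i)) = (\<Sum>t\<le>N. coeff h t * (\<Sum>i\<in>I. f i * of_int i ^ t))"
  by (simp add: poly_sum_upto[OF assms] sum_distrib_left sum_distrib_right algebra_simps sum.swap[of _ I])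

lemma vander:
  fixes f :: "int \<Rightarrow> complex"
  assumes I: "finite I" and m: "\<And>p::nat. (\<Sum>i\<in>I. f i * of_int i ^ p) = 0" and i0: "i0 \<in> I"
  shows "f i0 = 0"
proof -
  define h where "h = (\<Prod>l\<in>I - {i0}. [:- of_int l, 1:] :: complex poly)"
  have ph: "poly h x = (\<Prod>l\<in>I - {i0}. x - of_int l)" for x
    unfolding h_def poly_prod by simp
  have "(\<Sum>i\<in>I. f i * poly h (of_int i)) = (\<Sum>t\<le>degree h. coeff h t * (\<Sum>i\<in>I. f i * of_int i ^ t))"
    by (rule POLY) simp
  also have "\<dots> = 0" by (simp add: m)
  finally have z: "(\<Sum>i\<in>I. f i * poly h (of_int i)) = 0" .
  have r: "(\<Sum>i\<in>I - {i0}. f i * poly h (of_int i)) = 0"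
  proof (rule sum.neutral, rule ballI)
    fix i assume "i \<in> I - {i0}"
    then have "poly h (of_int i) = 0" unfolding ph using I
      by (intro prod_zero) auto
    then show "f i * poly h (of_int i) = 0" by simp
  qed
  have "(\<Sum>i\<in>I. f i * poly h (of_int i)) = f i0 * poly h (of_int i0)"
    using sum.remove[OF I i0, of "\<lambda>i. f i * poly h (of_int i)"] r by simp
  moreover have "poly h (of_int i0) \<noteq> 0" unfolding ph using I by (subst prod_zero_iff) auto
  ultimately show ?thesis using z by simp
qed

definition pm :: "(nat \<Rightarrow> complex) \<Rightarrow> nat \<Rightarrow> complex poly" where
  "pm d K = (\<Prod>l<K. [:- d l, 1:])"

lemma pm_Suc: "pm d (Suc K) = smult (- d K) (pm d K) + pCons 0 (pm d K)"
  by (simp add: pm_def lessThan_Suc algebra_simps)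

lemma pm_coeff: "(\<forall>n>K. coeff (pm d K) n = 0) \<and> coeff (pm d K) K = 1 \<and>
   (K \<ge> 1 \<longrightarrow> coeff (pm d K) (K - 1) = - (\<Sum>l<K. d l))"
proof (induction K)
  case 0
  then show ?case by (auto simp: pm_def coeff_pCons split: nat.splits)
next
  case (Suc K)
  then have a: "\<And>n. n > K \<Longrightarrow> coeff (pm d K) n = 0" and b: "coeff (pm d K) K = 1"
    and c: "K \<ge> 1 \<Longrightarrow> coeff (pm d K) (K - 1) = - (\<Sum>l<K. d l)" by auto
  have 1: "\<forall>n>Suc K. coeff (pm d (Suc K)) n = 0"
  proof (intro allI impI)
    fix n assume "n > Suc K"
    then obtain n' where "n = Suc n'" "n' > K" by (cases n) auto
    then show "coeff (pm d (Suc K)) n = 0" by (simp add: pm_Suc a)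
  qed
  have 2: "coeff (pm d (Suc K)) (Suc K) = 1" by (simp add: pm_Suc a b)
  have 3: "coeff (pm d (Suc K)) K = - (\<Sum>l<Suc K. d l)"
  proof (cases K)
    case 0 then show ?thesis by (simp add: pm_Suc pm_def)
  next
    case (Suc K')
    then have "coeff (pm d (Suc K)) K = - d K * coeff (pm d K) K + coeff (pm d K) K'" by (simp add: pm_Suc)
    then show ?thesis using b c Suc by simp
  qed
  show ?case using 1 2 3 by auto
qed

lemma pm_degree: "degree (pm d K) \<le> K"
  using pm_coeff[of K d] by (intro degree_le) auto

lemma pm_poly: "poly (pm d K) x = (\<Prod>l<K. x - d l)"
  by (simp add: pm_def poly_prod)

lemma gchoose_pm: "((x - c) gchoose K :: complex) = poly (smult (1 / fact K) (pm (\<lambda>l. c + of_nat l) K)) x"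
  by (simp add: gbinomial_prod_rev pm_poly atLeast0LessThan algebra_simps)

lemma moment_gchoose:
  fixes f :: "int \<Rightarrow> complex"
  assumes K: "1 \<le> K" and z: "\<And>t. t + 1 < K \<Longrightarrow> (\<Sum>i\<in>I. f i * of_int i ^ t) = 0"
  shows "(\<Sum>i\<in>I. f i * ((of_int i - c) gchoose K))
     = ((\<Sum>i\<in>I. f i * of_int i ^ K) - (\<Sum>l<K. c + of_nat l) * (\<Sum>i\<in>I. f i * of_int i ^ (K - 1))) / fact K"
proof -
  define h where "h = smult (1 / fact K) (pm (\<lambda>l. c + of_nat l) K)"
  have dh: "degree h \<le> K" unfolding h_def using pm_degree[of "\<lambda>l. c + of_nat l" K] by simp
  have "(\<Sum>i\<in>I. f i * ((of_int i - c) gchoose K)) = (\<Sum>i\<in>I. f i * poly h (of_int i))"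
    unfolding h_def gchoose_pm ..
  also have "\<dots> = (\<Sum>t\<le>K. coeff h t * (\<Sum>i\<in>I. f i * of_int i ^ t))" by (rule POLY[OF dh])
  also have "\<dots> = (\<Sum>t\<in>{K - 1, K}. coeff h t * (\<Sum>i\<in>I. f i * of_int i ^ t))"
    using K by (intro sum.mono_neutral_right) (auto simp: z)
  also have "\<dots> = coeff h (K - 1) * (\<Sum>i\<in>I. f i * of_int i ^ (K - 1)) + coeff h K * (\<Sum>i\<in>I. f i * of_int i ^ K)"
    using K by simp
  also have "coeff h K = 1 / fact K" unfolding h_def using pm_coeff[of K "\<lambda>l. c + of_nat l"] by simp
  also have "coeff h (K - 1) = - (\<Sum>l<K. c + of_nat l) / fact K"
    unfolding h_def using pm_coeff[of K "\<lambda>l. c + of_nat l"] K by simp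
  finally show ?thesis by (simp add: field_simps)
qed

definition Phi :: "(int \<Rightarrow> complex) \<Rightarrow> complex \<Rightarrow> int \<Rightarrow> complex" where
  "Phi X lam p = (\<Sum>r\<in>{r::nat. X (int r - p - 1) \<noteq> 0}. lam ^ r / fact r * X (int r - p - 1))"

lemma Phi_upto:
  assumes N: "\<And>n. N \<le> n \<Longrightarrow> X n = 0" and R: "N + p \<le> int R"
  shows "Phi X lam p = (\<Sum>r\<le>R. lam ^ r / fact r * X (int r - p - 1))"
  unfolding Phi_def
proof (rule sum.mono_neutral_left)
  show "{r. X (int r - p - 1) \<noteq> 0} \<subseteq> {..R}"
  proof
    fix r assume "r \<in> {r. X (int r - p - 1) \<noteq> 0}"
    then have "\<not> N \<le> int r - p - 1" using N by auto
    then show "r \<in> {..R}" using R by auto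
  qed
qed auto

lemma exp_binom: "(a + b :: complex) ^ m / fact m = (\<Sum>u\<le>m. b ^ u / fact u * (a ^ (m - u) / fact (m - u)))"
proof -
  have "(a + b) ^ m = (\<Sum>u\<le>m. of_nat (m choose u) * b ^ u * a ^ (m - u))"
    using binomial_ring[of b a m] by (simp add: add.commute)
  then have "(a + b) ^ m / fact m = (\<Sum>u\<le>m. of_nat (m choose u) * b ^ u * a ^ (m - u) / fact m)"
    by (simp add: sum_divide_distrib)
  also have "\<dots> = (\<Sum>u\<le>m. b ^ u / fact u * (a ^ (m - u) / fact (m - u)))"
    by (intro sum.cong refl) (simp add: binomial_fact field_simps)
  finally show ?thesis .
qed

lemma Phi_shift:
  assumes N: "\<And>n. N \<le> n \<Longrightarrow> X n = 0" and U: "N + p \<le> int U"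
  shows "Phi X (lam + mu) p = (\<Sum>u\<le>U. mu ^ u / fact u * Phi X lam (p - int u))"
proof -
  define g where "g u r = mu ^ u / fact u * (lam ^ r / fact r * X (int r - (p - int u) - 1))" for u r
  have "(\<Sum>u\<le>U. mu ^ u / fact u * Phi X lam (p - int u)) = (\<Sum>u\<le>U. \<Sum>r\<le>U. g u r)"
  proof (intro sum.cong refl)
    fix u assume "u \<in> {..U}"
    have "Phi X lam (p - int u) = (\<Sum>r\<le>U. lam ^ r / fact r * X (int r - (p - int u) - 1))"
      by (rule Phi_upto[OF N]) (use U in auto)
    then show "mu ^ u / fact u * Phi X lam (p - int u) = (\<Sum>r\<le>U. g u r)"
      by (simp add: g_def sum_distrib_left)
  qed
  also have "\<dots> = (\<Sum>(u, r)\<in>{..U} \<times> {..U}. g u r)" by (rule sum.cartesian_product)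
  also have "\<dots> = (\<Sum>(u, r)\<in>{(u, r). u + r \<le> U}. g u r)"
  proof (rule sum.mono_neutral_right)
    show "\<forall>x\<in>{..U} \<times> {..U} - {(u, r). u + r \<le> U}. (case x of (u, r) \<Rightarrow> g u r) = 0"
    proof
      fix x assume x: "x \<in> {..U} \<times> {..U} - {(u, r). u + r \<le> U}"
      obtain u r where "x = (u, r)" by (cases x)
      with x have "N \<le> int r - (p - int u) - 1" using U by auto
      then show "(case x of (u, r) \<Rightarrow> g u r) = 0" using \<open>x = (u, r)\<close> by (simp add: g_def N)
    qed
  qed auto
  also have "\<dots> = (\<Sum>m\<le>U. \<Sum>u\<le>m. g u (m - u))" by (rule sum.triangle_reindex_eq)
  also have "\<dots> = (\<Sum>m\<le>U. (lam + mu) ^ m / fact m * X (int m - p - 1))"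
  proof (intro sum.cong refl)
    fix m
    have "\<And>u. u \<in> {..m} \<Longrightarrow> g u (m - u) = mu ^ u / fact u * (lam ^ (m - u) / fact (m - u)) * X (int m - p - 1)"
      by (auto simp: g_def of_nat_diff)
    then have "(\<Sum>u\<le>m. g u (m - u)) = (\<Sum>u\<le>m. mu ^ u / fact u * (lam ^ (m - u) / fact (m - u))) * X (int m - p - 1)"
      by (simp add: sum_distrib_right)
    also have "\<dots> = (lam + mu) ^ m / fact m * X (int m - p - 1)" by (simp add: exp_binom)
    finally show "(\<Sum>u\<le>m. g u (m - u)) = \<dots>" .
  qed
  also have "\<dots> = Phi X (lam + mu) p" by (rule Phi_upto[OF N, symmetric]) (use U in auto)
  finally show ?thesis ..
qed

definition mom :: "(int \<Rightarrow> int \<Rightarrow> complex) \<Rightarrow> int \<Rightarrow> nat \<Rightarrow> complex" where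
  "mom F q p = (\<Sum>i\<in>{i. F i (q - i) \<noteq> 0}. F i (q - i) * of_int i ^ p)"

definition Ak :: "nat \<Rightarrow> (int \<Rightarrow> int \<Rightarrow> complex) \<Rightarrow> int \<Rightarrow> int \<Rightarrow> complex" where
  "Ak k X q p = (\<Sum>l\<le>k. of_nat (k choose l) * (-1)^(k - l) * Phi (X (int k - q - 1)) (of_nat l) p)"

definition good :: "nat \<Rightarrow> (int \<Rightarrow> int \<Rightarrow> complex) \<Rightarrow> (int \<Rightarrow> int \<Rightarrow> complex) \<Rightarrow> bool" where
  "good k P X \<longleftrightarrow> (\<exists>A. \<forall>i j. i < A \<or> j < A \<longrightarrow> FF k P i j = 0)
     \<and> (\<forall>q p. mom (FF k P) q p = fact p * Ak k X q (int p))
     \<and> (\<forall>q p. p < 0 \<longrightarrow> Ak k X q p = 0)"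

lemma mom_interval:
  assumes A: "\<And>i j. i < A \<or> j < A \<Longrightarrow> F i j = 0" and "L \<le> A" "q - A \<le> U"
  shows "mom F q p = (\<Sum>i\<in>{L..U}. F i (q - i) * of_int i ^ p)"
  unfolding mom_def
proof (rule sum.mono_neutral_left)
  show "{i. F i (q - i) \<noteq> 0} \<subseteq> {L..U}"
  proof
    fix i assume "i \<in> {i. F i (q - i) \<noteq> 0}"
    then have "\<not> (i < A \<or> q - i < A)" using A by blast
    then show "i \<in> {L..U}" using assms by auto
  qed
qed auto

lemma Ak_Dk:
  assumes N: "\<And>s n. N \<le> n \<Longrightarrow> X s n = 0" and R: "N + t \<le> int R"
  shows "Ak k X q t = (\<Sum>r\<le>R. Dk k r / fact r * X (int k - q - 1) (int r - t - 1))"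
proof -
  have "Ak k X q t = (\<Sum>l\<le>k. of_nat (k choose l) * (-1)^(k - l) *
      (\<Sum>r\<le>R. (of_nat l) ^ r / fact r * X (int k - q - 1) (int r - t - 1)))"
    unfolding Ak_def by (intro sum.cong refl, subst Phi_upto[where N=N]) (use N R in auto)
  also have "\<dots> = (\<Sum>r\<le>R. Dk k r / fact r * X (int k - q - 1) (int r - t - 1))"
    unfolding Dk_def by (simp add: sum_distrib_left sum_distrib_right sum_divide_distrib algebra_simps sum.swap[of _ "{..k}"])
  finally show ?thesis .
qed

lemma binom1: "(of_int x + 1 :: complex) ^ p = (\<Sum>t\<le>p. of_nat (p choose t) * of_int x ^ t)"
  using binomial_ring[of "of_int x :: complex" 1 p] by simp

lemma binom1': "(1 + of_int x :: complex) ^ p = (\<Sum>t\<le>p. of_nat (p choose t) * of_int x ^ t)"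
  using binom1[of x p] by (simp add: add.commute)

lemma sum_shift_int: "(\<Sum>i\<in>{a..b::int}. f i) = (\<Sum>i\<in>{a - 1..b - 1}. f (i + 1))"
  by (rule sum.reindex_bij_witness[of _ "\<lambda>i. i + 1" "\<lambda>i. i - 1"]) auto

lemma rev_conv:
  fixes g :: "int \<Rightarrow> complex"
  assumes neg: "\<And>t. t < 0 \<Longrightarrow> g t = 0" and U: "p \<le> U"
  shows "fact p * (\<Sum>u\<le>U. (if u = 0 then 0 else 1 / fact u * g (int p - int u)))
       = (\<Sum>t<p. of_nat (p choose t) * (fact t * g (int t)))"
proof -
  have "(\<Sum>u\<le>U. (if u = 0 then 0 else 1 / fact u * g (int p - int u)))
      = (\<Sum>u\<in>{1..p}. 1 / fact u * g (int p - int u))"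
  proof -
    have "(\<Sum>u\<le>U. (if u = 0 then 0 else 1 / fact u * g (int p - int u)))
        = (\<Sum>u\<in>{1..p}. (if u = 0 then 0 else 1 / fact u * g (int p - int u)))"
      using U by (intro sum.mono_neutral_right) (auto simp: neg)
    then show ?thesis by simp
  qed
  also have "\<dots> = (\<Sum>t<p. 1 / fact (p - t) * g (int t))"
    by (rule sum.reindex_bij_witness[of _ "\<lambda>t. p - t" "\<lambda>u. p - u"]) (auto simp: of_nat_diff)
  finally have "fact p * (\<Sum>u\<le>U. (if u = 0 then 0 else 1 / fact u * g (int p - int u)))
      = (\<Sum>t<p. fact p / fact (p - t) * g (int t))"
    by (simp add: sum_distrib_left)
  also have "\<dots> = (\<Sum>t<p. of_nat (p choose t) * (fact t * g (int t)))"
    by (intro sum.cong refl) (simp add: binomial_fact field_simps)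
  finally show ?thesis .
qed

lemma good_Suc:
  assumes N: "\<And>s n. N \<le> n \<Longrightarrow> X s n = 0" and g: "good k P X"
  shows "good (Suc k) P X"
proof -
  obtain A where A: "\<And>i j. i < A \<or> j < A \<Longrightarrow> FF k P i j = 0"
    and m: "\<And>q p. mom (FF k P) q p = fact p * Ak k X q (int p)"
    and neg: "\<And>q p. p < 0 \<Longrightarrow> Ak k X q p = 0"
    using g unfolding good_def by blast
  define F where "F = FF k P"
  have A1: "FF (Suc k) P i j = 0" if "i < A \<or> j < A" for i j
    using that A by (auto simp: FF_Suc)
  have Ak_rec: "Ak (Suc k) X q p = (\<Sum>u\<le>nat (\<bar>N\<bar> + \<bar>p\<bar>). (if u = 0 then 0 else 1 / fact u * Ak k X (q - 1) (p - int u)))" for q p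
  proof -
    define s where "s = int (Suc k) - q - 1"
    define U where "U = nat (\<bar>N\<bar> + \<bar>p\<bar>)"
    have sh: "Phi (X s) (1 + of_nat l) p - Phi (X s) (of_nat l) p
        = (\<Sum>u\<le>U. (if u = 0 then 0 else 1 / fact u * Phi (X s) (of_nat l) (p - int u)))" for l
    proof -
      have "Phi (X s) (1 + of_nat l) p = Phi (X s) (of_nat l + 1) p" by (simp add: add.commute)
      also have "Phi (X s) (of_nat l + 1) p = (\<Sum>u\<le>U. 1 ^ u / fact u * Phi (X s) (of_nat l) (p - int u))"
        by (rule Phi_shift[where N=N]) (use N in \<open>auto simp: U_def\<close>)
      also have "\<dots> = Phi (X s) (of_nat l) p + (\<Sum>u\<le>U. (if u = 0 then 0 else 1 / fact u * Phi (X s) (of_nat l) (p - int u)))"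
      proof -
        have "(\<Sum>u\<le>U. 1 ^ u / fact u * Phi (X s) (of_nat l) (p - int u))
           = (\<Sum>u\<le>U. (if u = 0 then Phi (X s) (of_nat l) p else 0) + (if u = 0 then 0 else 1 / fact u * Phi (X s) (of_nat l) (p - int u)))"
          by (intro sum.cong refl) auto
        also have "\<dots> = Phi (X s) (of_nat l) p + (\<Sum>u\<le>U. (if u = 0 then 0 else 1 / fact u * Phi (X s) (of_nat l) (p - int u)))"
          by (simp add: sum.distrib)
        finally show ?thesis .
      qed
      finally show ?thesis by simp
    qed
    have "Ak (Suc k) X q p = (\<Sum>l\<le>k. of_nat (k choose l) * (-1)^(k - l) *
          (Phi (X s) (of_nat (Suc l)) p - Phi (X s) (of_nat l) p))"
      unfolding Ak_def s_def by (rule fd_Suc)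
    also have "\<dots> = (\<Sum>l\<le>k. \<Sum>u\<le>U. of_nat (k choose l) * (-1)^(k - l) *
          (if u = 0 then 0 else 1 / fact u * Phi (X s) (of_nat l) (p - int u)))"
      by (simp add: sh sum_distrib_left)
    also have "\<dots> = (\<Sum>u\<le>U. (if u = 0 then 0 else 1 / fact u * Ak k X (q - 1) (p - int u)))"
    proof -
      have s': "int k - (q - 1) - 1 = s" unfolding s_def by simp
      show ?thesis
        unfolding Ak_def s' by (subst sum.swap) (auto intro!: sum.cong simp: sum_distrib_left algebra_simps)
    qed
    finally show ?thesis unfolding U_def .
  qed
  have 2: "mom (FF (Suc k) P) q p = fact p * Ak (Suc k) X q (int p)" for q p
  proof -
    have "mom (FF (Suc k) P) q p = (\<Sum>i\<in>{A..q - A + 1}. FF (Suc k) P i (q - i) * of_int i ^ p)"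
      by (rule mom_interval[OF A1]) auto
    also have "\<dots> = (\<Sum>i\<in>{A..q - A + 1}. F (i - 1) (q - i) * of_int i ^ p)
        - (\<Sum>i\<in>{A..q - A + 1}. F i (q - 1 - i) * of_int i ^ p)"
      by (simp add: FF_Suc F_def sum_subtractf[symmetric] algebra_simps)
    also have "(\<Sum>i\<in>{A..q - A + 1}. F (i - 1) (q - i) * of_int i ^ p)
        = (\<Sum>i\<in>{A - 1..q - A}. F i (q - 1 - i) * (of_int i + 1) ^ p)"
      by (subst sum_shift_int) (simp add: algebra_simps)
    also have "\<dots> = (\<Sum>t\<le>p. of_nat (p choose t) * (\<Sum>i\<in>{A - 1..q - A}. F i (q - 1 - i) * of_int i ^ t))"
      by (simp add: binom1' sum_distrib_left sum_distrib_right algebra_simps sum.swap[of _ "{A - 1..q - A}"])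
    also have "\<dots> = (\<Sum>t\<le>p. of_nat (p choose t) * mom F (q - 1) t)"
      by (intro sum.cong refl, subst mom_interval[where A=A]) (use A in \<open>auto simp: F_def\<close>)
    also have "(\<Sum>i\<in>{A..q - A + 1}. F i (q - 1 - i) * of_int i ^ p) = mom F (q - 1) p"
      by (subst mom_interval[where A=A]) (use A in \<open>auto simp: F_def\<close>)
    finally have "mom (FF (Suc k) P) q p = (\<Sum>t<p. of_nat (p choose t) * mom F (q - 1) t)"
      by (simp add: lessThan_Suc_atMost[symmetric])
    also have "\<dots> = (\<Sum>t<p. of_nat (p choose t) * (fact t * Ak k X (q - 1) (int t)))"
      by (simp add: m F_def)
    also have "\<dots> = fact p * Ak (Suc k) X q (int p)"
      unfolding Ak_rec by (rule rev_conv[symmetric]) (auto simp: neg)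
    finally show ?thesis .
  qed
  have 3: "Ak (Suc k) X q p = 0" if "p < 0" for q p
    unfolding Ak_rec using that by (intro sum.neutral) (auto simp: neg)
  show ?thesis unfolding good_def using A1 2 3 by blast
qed

lemma m1powi: "(-1::complex) powi z = (if even z then 1 else -1)"
  by (cases "even z") auto

lemma dconv:
  fixes Z :: "nat \<Rightarrow> complex"
  assumes Z: "\<And>m. R < m \<Longrightarrow> Z m = 0"
  shows "(\<Sum>r\<le>R. \<Sum>j\<le>R. a ^ r / fact r * (b ^ j / fact j) * Z (r + j)) = (\<Sum>m\<le>R. (a + b) ^ m / fact m * Z m)"
proof -
  define g where "g r j = a ^ r / fact r * (b ^ j / fact j) * Z (r + j)" for r j
  have "(\<Sum>r\<le>R. \<Sum>j\<le>R. g r j) = (\<Sum>(r, j)\<in>{..R} \<times> {..R}. g r j)" by (rule sum.cartesian_product)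
  also have "\<dots> = (\<Sum>(r, j)\<in>{(r, j). r + j \<le> R}. g r j)"
    by (rule sum.mono_neutral_right) (auto simp: g_def, metis Z not_le)
  also have "\<dots> = (\<Sum>m\<le>R. \<Sum>r\<le>m. g r (m - r))" by (rule sum.triangle_reindex_eq)
  also have "\<dots> = (\<Sum>m\<le>R. (a + b) ^ m / fact m * Z m)"
  proof (intro sum.cong refl)
    fix m
    have "(\<Sum>r\<le>m. g r (m - r)) = (\<Sum>r\<le>m. a ^ r / fact r * (b ^ (m - r) / fact (m - r))) * Z m"
      unfolding sum_distrib_right by (intro sum.cong refl) (auto simp: g_def)
    also have "(\<Sum>r\<le>m. a ^ r / fact r * (b ^ (m - r) / fact (m - r))) = (b + a) ^ m / fact m"
      by (rule exp_binom[symmetric])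
    also have "b + a = a + b" by simp
    finally show "(\<Sum>r\<le>m. g r (m - r)) = (a + b) ^ m / fact m * Z m" .
  qed
  finally show ?thesis unfolding g_def .
qed

lemma Phi_skew:
  fixes X1 X2 :: "int \<Rightarrow> complex"
  assumes N1: "\<And>n. N \<le> n \<Longrightarrow> X1 n = 0" and N2: "\<And>n. N \<le> n \<Longrightarrow> X2 n = 0"
    and skew: "\<And>n J. N \<le> n + int J \<Longrightarrow> X1 n = - ((-1) powi n) * (\<Sum>j\<le>J. c ^ j / fact j * X2 (n + int j))"
  shows "Phi X1 lam p = (-1) powi p * Phi X2 (c - lam) p"
proof -
  define R where "R = nat (\<bar>N\<bar> + \<bar>p\<bar> + 1)"
  have R1: "N + p \<le> int R" unfolding R_def by linarith
  have "Phi X1 lam p = (\<Sum>r\<le>R. lam ^ r / fact r * X1 (int r - p - 1))"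
    by (rule Phi_upto[OF N1 R1])
  also have "\<dots> = (\<Sum>r\<le>R. (-1) powi p * (\<Sum>j\<le>R. (- lam) ^ r / fact r * (c ^ j / fact j) * X2 (int r - p - 1 + int j)))"
  proof (intro sum.cong refl)
    fix r
    have e: "X1 (int r - p - 1) = - ((-1) powi (int r - p - 1)) * (\<Sum>j\<le>R. c ^ j / fact j * X2 (int r - p - 1 + int j))"
      by (rule skew[of "int r - p - 1" R]) (unfold R_def, linarith)
    have s: "- ((-1::complex) powi (int r - p - 1)) * lam ^ r = (-1) powi p * (- lam) ^ r"
    proof -
      have "(- lam) ^ r = (-1) ^ r * lam ^ r" by (rule power_minus)
      then show ?thesis by (auto simp: m1powi minus_one_power_iff even_add)
    qed
    show "lam ^ r / fact r * X1 (int r - p - 1) = (-1) powi p * (\<Sum>j\<le>R. (- lam) ^ r / fact r * (c ^ j / fact j) * X2 (int r - p - 1 + int j))"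
    proof -
      define \<sigma> where "\<sigma> = ((-1::complex) powi (int r - p - 1))"
      have t: "lam ^ r / fact r * (- \<sigma> * (c ^ j / fact j * X2 (int r - p - 1 + int j)))
         = (-1) powi p * ((- lam) ^ r / fact r * (c ^ j / fact j) * X2 (int r - p - 1 + int j))" for j
      proof -
        have "lam ^ r / fact r * (- \<sigma> * (c ^ j / fact j * X2 (int r - p - 1 + int j)))
          = (- \<sigma> * lam ^ r) * (c ^ j * X2 (int r - p - 1 + int j) / (fact r * fact j))"
          by (simp add: field_simps)
        also have "\<dots> = ((-1) powi p * (- lam) ^ r) * (c ^ j * X2 (int r - p - 1 + int j) / (fact r * fact j))"
          using s unfolding \<sigma>_def by (simp only:)
        also have "\<dots> = (-1) powi p * ((- lam) ^ r / fact r * (c ^ j / fact j) * X2 (int r - p - 1 + int j))"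
          by (simp add: field_simps)
        finally show ?thesis .
      qed
      show ?thesis unfolding e \<sigma>_def[symmetric] sum_distrib_left t ..
    qed
  qed
  also have "\<dots> = (-1) powi p * (\<Sum>r\<le>R. \<Sum>j\<le>R. (- lam) ^ r / fact r * (c ^ j / fact j) * X2 (int (r + j) - p - 1))"
    by (simp add: sum_distrib_left algebra_simps)
  also have "(\<Sum>r\<le>R. \<Sum>j\<le>R. (- lam) ^ r / fact r * (c ^ j / fact j) * X2 (int (r + j) - p - 1))
      = (\<Sum>m\<le>R. (- lam + c) ^ m / fact m * X2 (int m - p - 1))"
    by (rule dconv[where Z="\<lambda>m. X2 (int m - p - 1)"]) (use R1 N2 in auto)
  also have "\<dots> = Phi X2 (c - lam) p"
  proof -
    have "- lam + c = c - lam" by simp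
    then show ?thesis by (simp only: Phi_upto[OF N2 R1])
  qed
  finally show ?thesis .
qed

lemma sgn_split: "l \<le> k \<Longrightarrow> ((-1::complex)^l) = (-1)^k * (-1)^(k - l)"
proof -
  assume "l \<le> k"
  then obtain d where "k = l + d" using le_Suc_ex by blast
  then show ?thesis by (simp add: power_add mult.assoc)
qed

lemma sgn_split2: "t \<le> p \<Longrightarrow> ((-1::complex)^p) = (-1)^(p - t) * (-1)^t"
proof -
  assume "t \<le> p"
  then obtain d where "p = t + d" using le_Suc_ex by blast
  then show ?thesis by (simp add: power_add)
qed

lemma LOC:
  fixes P1 P2 X1 X2 :: "int \<Rightarrow> int \<Rightarrow> complex"
  assumes N1: "\<And>s n. N \<le> n \<Longrightarrow> X1 s n = 0" and N2: "\<And>s n. N \<le> n \<Longrightarrow> X2 s n = 0"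
    and skew: "\<And>s n J. N \<le> n + int J \<Longrightarrow>
        X1 s n = - ((-1) powi n) * (\<Sum>j\<le>J. (of_int s + 1) ^ j / fact j * X2 s (n + int j))"
    and g1: "good k P1 X1" and g2: "good k P2 X2"
  shows "FF k P1 i j = (-1)^k * FF k P2 j i"
proof -
  obtain A1 where A1: "\<And>i j. i < A1 \<or> j < A1 \<Longrightarrow> FF k P1 i j = 0"
    and m1: "\<And>q p. mom (FF k P1) q p = fact p * Ak k X1 q (int p)"
    using g1 unfolding good_def by blast
  obtain A2 where A2: "\<And>i j. i < A2 \<or> j < A2 \<Longrightarrow> FF k P2 i j = 0"
    and m2: "\<And>q p. mom (FF k P2) q p = fact p * Ak k X2 q (int p)"
    and neg2: "\<And>q p. p < 0 \<Longrightarrow> Ak k X2 q p = 0"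
    using g2 unfolding good_def by blast
  have KI: "Ak k X1 q (int p) = (-1)^p * (-1)^k * (\<Sum>u\<le>p. (- of_int q) ^ u / fact u * Ak k X2 q (int p - int u))" for q p
  proof -
    define s where "s = int k - q - 1"
    define U where "U = nat (\<bar>N\<bar> + int p)"
    have U1: "N + int p \<le> int U" "p \<le> U" unfolding U_def by linarith+
    have "Ak k X1 q (int p) = (\<Sum>l\<le>k. of_nat (k choose l) * (-1)^(k - l) * ((-1)^p * Phi (X2 s) (of_int s + 1 - of_nat l) (int p)))"
      unfolding Ak_def s_def[symmetric]
    proof (intro sum.cong refl)
      fix l
      have "Phi (X1 s) (of_nat l) (int p) = (-1) powi (int p) * Phi (X2 s) (of_int s + 1 - of_nat l) (int p)"
        using Phi_skew[where N=N and c="of_int s + 1", OF N1[where s=s] N2[where s=s] skew[where s=s]] by simp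
      then show "of_nat (k choose l) * (-1)^(k - l) * Phi (X1 s) (of_nat l) (int p) =
          of_nat (k choose l) * (-1)^(k - l) * ((-1)^p * Phi (X2 s) (of_int s + 1 - of_nat l) (int p))" by simp
    qed
    also have "\<dots> = (\<Sum>l\<le>k. of_nat (k choose l) * (-1)^l * ((-1)^p * Phi (X2 s) (of_nat l + (- of_int q)) (int p)))"
    proof (rule sum.reindex_bij_witness[of _ "\<lambda>l. k - l" "\<lambda>l. k - l"])
      fix l assume l: "l \<in> {..k}"
      then have e1: "of_nat (k - l) + (- of_int q) = (of_int s + 1 - of_nat l :: complex)"
        unfolding s_def by (simp add: of_nat_diff)
      have e2: "k choose (k - l) = k choose l" using binomial_symmetric[of l k] l by simp
      show "of_nat (k choose (k - l)) * (-1)^(k - l) * ((-1)^p * Phi (X2 s) (of_nat (k - l) + (- of_int q)) (int p))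
        = of_nat (k choose l) * (-1)^(k - l) * ((-1)^p * Phi (X2 s) (of_int s + 1 - of_nat l) (int p))"
        unfolding e1 e2 ..
    qed auto
    also have "\<dots> = (\<Sum>l\<le>k. of_nat (k choose l) * (-1)^l * ((-1)^p *
        (\<Sum>u\<le>U. (- of_int q) ^ u / fact u * Phi (X2 s) (of_nat l) (int p - int u))))"
      by (intro sum.cong refl, subst Phi_shift[where N=N and U=U]) (use N2 U1 in auto)
    also have "\<dots> = (-1)^p * (-1)^k * (\<Sum>u\<le>U. (- of_int q) ^ u / fact u *
        (\<Sum>l\<le>k. of_nat (k choose l) * (-1)^(k - l) * Phi (X2 s) (of_nat l) (int p - int u)))"
    proof -
      have "(\<Sum>l\<le>k. of_nat (k choose l) * (-1)^l * ((-1)^p *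
        (\<Sum>u\<le>U. (- of_int q) ^ u / fact u * Phi (X2 s) (of_nat l) (int p - int u))))
        = (\<Sum>l\<le>k. \<Sum>u\<le>U. (-1)^p * (-1)^k * ((- of_int q) ^ u / fact u *
           (of_nat (k choose l) * (-1)^(k - l) * Phi (X2 s) (of_nat l) (int p - int u))))"
      proof (intro sum.cong refl)
        fix l assume "l \<in> {..k}"
        then have sl: "((-1)^l :: complex) = (-1)^k * (-1)^(k - l)" by (intro sgn_split) simp
        show "of_nat (k choose l) * (-1)^l * ((-1)^p *
          (\<Sum>u\<le>U. (- of_int q) ^ u / fact u * Phi (X2 s) (of_nat l) (int p - int u)))
          = (\<Sum>u\<le>U. (-1)^p * (-1)^k * ((- of_int q) ^ u / fact u *
           (of_nat (k choose l) * (-1)^(k - l) * Phi (X2 s) (of_nat l) (int p - int u))))"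
          unfolding sl by (simp add: sum_distrib_left mult_ac)
      qed
      also have "\<dots> = (\<Sum>u\<le>U. \<Sum>l\<le>k. (-1)^p * (-1)^k * ((- of_int q) ^ u / fact u *
           (of_nat (k choose l) * (-1)^(k - l) * Phi (X2 s) (of_nat l) (int p - int u))))"
        by (rule sum.swap)
      finally show ?thesis by (simp only: sum_distrib_left)
    qed
    also have "\<dots> = (-1)^p * (-1)^k * (\<Sum>u\<le>U. (- of_int q) ^ u / fact u * Ak k X2 q (int p - int u))"
      unfolding Ak_def s_def ..
    also have "(\<Sum>u\<le>U. (- of_int q) ^ u / fact u * Ak k X2 q (int p - int u))
        = (\<Sum>u\<le>p. (- of_int q) ^ u / fact u * Ak k X2 q (int p - int u))"
      using U1 by (intro sum.mono_neutral_right) (auto simp: neg2)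
    finally show ?thesis .
  qed
  have MI: "mom (FF k P1) q p = (-1)^k * (\<Sum>t\<le>p. of_nat (p choose t) * of_int q ^ (p - t) * (-1)^t * mom (FF k P2) q t)" for q p
  proof -
    have "mom (FF k P1) q p = (-1)^k * (\<Sum>u\<le>p. fact p * ((-1)^p * (- of_int q) ^ u / fact u) * Ak k X2 q (int p - int u))"
      by (simp add: m1 KI sum_distrib_left algebra_simps)
    also have "(\<Sum>u\<le>p. fact p * ((-1)^p * (- of_int q) ^ u / fact u) * Ak k X2 q (int p - int u))
       = (\<Sum>t\<le>p. of_nat (p choose t) * of_int q ^ (p - t) * (-1)^t * mom (FF k P2) q t)"
    proof (rule sum.reindex_bij_witness[of _ "\<lambda>t. p - t" "\<lambda>t. p - t"])
      fix u assume u: "u \<in> {..p}"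
      have c1: "of_nat (p choose (p - u)) * fact (p - u) = (fact p / fact u :: complex)"
        using u by (simp add: binomial_fact field_simps)
      have c2: "of_int q ^ (p - (p - u)) * (-1)^(p - u) = ((-1)^p * (- of_int q) ^ u :: complex)"
      proof -
        have "(- of_int q :: complex) ^ u = (-1)^u * of_int q ^ u" by (rule power_minus)
        moreover have "(-1::complex)^p = (-1)^(p - u) * (-1)^u"
          using u by (intro sgn_split2) simp
        moreover have "p - (p - u) = u" using u by simp
        ultimately show ?thesis by simp
      qed
      have c3: "int (p - u) = int p - int u" using u by simp
      show "of_nat (p choose (p - u)) * of_int q ^ (p - (p - u)) * (-1)^(p - u) * mom (FF k P2) q (p - u)
          = fact p * ((-1)^p * (- of_int q) ^ u / fact u) * Ak k X2 q (int p - int u)"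
      proof -
        have "of_nat (p choose (p - u)) * of_int q ^ (p - (p - u)) * (-1)^(p - u) * mom (FF k P2) q (p - u)
          = (of_nat (p choose (p - u)) * fact (p - u)) * (of_int q ^ (p - (p - u)) * (-1)^(p - u)) * Ak k X2 q (int (p - u))"
          by (simp add: m2)
        also have "\<dots> = fact p * ((-1)^p * (- of_int q) ^ u / fact u) * Ak k X2 q (int p - int u)"
          unfolding c1 c2 c3 by simp
        finally show ?thesis .
      qed
    qed auto
    finally show ?thesis .
  qed
  define q where "q = i + j"
  define L where "L = min A1 A2"
  define D where "D x = FF k P1 x (q - x) - (-1)^k * FF k P2 (q - x) x" for x
  have bin: "(of_int (q - y) :: complex) ^ p = (\<Sum>t\<le>p. of_nat (p choose t) * of_int q ^ (p - t) * (-1)^t * of_int y ^ t)" for y p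
  proof -
    have "(of_int (q - y) :: complex) ^ p = (- of_int y + of_int q) ^ p" by simp
    also have "\<dots> = (\<Sum>t\<le>p. of_nat (p choose t) * (- of_int y) ^ t * of_int q ^ (p - t))"
      by (rule binomial_ring)
    also have "\<dots> = (\<Sum>t\<le>p. of_nat (p choose t) * of_int q ^ (p - t) * (-1)^t * of_int y ^ t)"
      by (intro sum.cong refl) (simp add: power_minus[of "of_int y"] mult_ac)
    finally show ?thesis .
  qed
  have m2I: "mom (FF k P2) q t = (\<Sum>y\<in>{L..q - L}. FF k P2 y (q - y) * of_int y ^ t)" for t
    by (rule mom_interval[OF A2]) (auto simp: L_def)
  have DI: "D x = 0" if x: "x \<in> {L..q - L}" for x
  proof (rule vander[where I="{L..q - L}"])
    fix p :: nat
    have a: "(\<Sum>x\<in>{L..q - L}. FF k P1 x (q - x) * of_int x ^ p) = mom (FF k P1) q p"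
      by (rule mom_interval[symmetric, OF A1]) (auto simp: L_def)
    have b: "(\<Sum>x\<in>{L..q - L}. FF k P2 (q - x) x * of_int x ^ p)
       = (\<Sum>t\<le>p. of_nat (p choose t) * of_int q ^ (p - t) * (-1)^t * mom (FF k P2) q t)"
    proof -
      have "(\<Sum>x\<in>{L..q - L}. FF k P2 (q - x) x * of_int x ^ p)
          = (\<Sum>y\<in>{L..q - L}. FF k P2 y (q - y) * of_int (q - y) ^ p)"
        by (rule sum.reindex_bij_witness[of _ "\<lambda>y. q - y" "\<lambda>x. q - x"]) auto
      also have "\<dots> = (\<Sum>y\<in>{L..q - L}. \<Sum>t\<le>p. of_nat (p choose t) * of_int q ^ (p - t) * (-1)^t * (FF k P2 y (q - y) * of_int y ^ t))"
        by (intro sum.cong refl) (unfold bin, simp add: sum_distrib_left mult_ac)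
      also have "\<dots> = (\<Sum>t\<le>p. \<Sum>y\<in>{L..q - L}. of_nat (p choose t) * of_int q ^ (p - t) * (-1)^t * (FF k P2 y (q - y) * of_int y ^ t))"
        by (rule sum.swap)
      also have "\<dots> = (\<Sum>t\<le>p. of_nat (p choose t) * of_int q ^ (p - t) * (-1)^t * (\<Sum>y\<in>{L..q - L}. FF k P2 y (q - y) * of_int y ^ t))"
        by (simp only: sum_distrib_left)
      also have "\<dots> = (\<Sum>t\<le>p. of_nat (p choose t) * of_int q ^ (p - t) * (-1)^t * mom (FF k P2) q t)"
        by (simp only: m2I)
      finally show ?thesis .
    qed
    have "(\<Sum>x\<in>{L..q - L}. D x * of_int x ^ p)
       = (\<Sum>x\<in>{L..q - L}. FF k P1 x (q - x) * of_int x ^ p) - (-1)^k * (\<Sum>x\<in>{L..q - L}. FF k P2 (q - x) x * of_int x ^ p)"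
      by (simp add: D_def sum_subtractf sum_distrib_left algebra_simps)
    also have "\<dots> = 0" unfolding a b MI by simp
    finally show "(\<Sum>x\<in>{L..q - L}. D x * of_int x ^ p) = 0" .
  qed (use x in auto)
  have "D i = 0"
  proof (cases "i \<in> {L..q - L}")
    case True then show ?thesis by (rule DI)
  next
    case False
    then have "i < A1 \<or> q - i < A1" "q - i < A2 \<or> i < A2" unfolding L_def by auto
    then show ?thesis unfolding D_def using A1 A2 by auto
  qed
  then show ?thesis unfolding D_def q_def by simp
qed

lemma sum_lin: "(\<Sum>l<K. c + of_nat l :: complex) = of_nat K * c + of_nat K * (of_nat K - 1) / 2"
  by (induction K) (simp_all add: field_simps)

lemma Dk_zero: "r < k \<Longrightarrow> Dk k r = 0" using Dk_facts[of k] by auto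
lemma Dk_kk: "Dk k k = fact k" using Dk_facts[of k] by auto
lemma Dk_k1: "Dk k (Suc k) = fact (Suc k) * of_nat k / 2" using Dk_facts[of k] by auto

lemma Ak_low:
  assumes X: "\<And>s n. 2 \<le> n \<Longrightarrow> X s n = 0" and t: "t + 3 \<le> k"
  shows "Ak k X q (int t) = 0"
proof -
  have "Ak k X q (int t) = (\<Sum>r\<le>t + 2. Dk k r / fact r * X (int k - q - 1) (int r - int t - 1))"
    by (rule Ak_Dk[where N=2]) (use X in auto)
  also have "\<dots> = 0" using t by (intro sum.neutral) (auto simp: Dk_zero)
  finally show ?thesis .
qed

lemma Ak_km2:
  assumes X: "\<And>s n. 2 \<le> n \<Longrightarrow> X s n = 0" and k: "2 \<le> k"
  shows "Ak k X q (int (k - 2)) = X (int k - q - 1) 1"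
proof -
  have "Ak k X q (int (k - 2)) = (\<Sum>r\<le>k. Dk k r / fact r * X (int k - q - 1) (int r - int (k - 2) - 1))"
    by (rule Ak_Dk[where N=2]) (use X k in auto)
  also have "\<dots> = (\<Sum>r<k. Dk k r / fact r * X (int k - q - 1) (int r - int (k - 2) - 1))
      + Dk k k / fact k * X (int k - q - 1) (int k - int (k - 2) - 1)"
    by (simp add: lessThan_Suc_atMost[symmetric])
  also have "(\<Sum>r<k. Dk k r / fact r * X (int k - q - 1) (int r - int (k - 2) - 1)) = 0"
    by (intro sum.neutral) (auto simp: Dk_zero)
  also have "int k - int (k - 2) - 1 = 1" using k by simp
  finally show ?thesis by (simp add: Dk_kk)
qed

lemma Ak_km1:
  assumes X: "\<And>s n. 2 \<le> n \<Longrightarrow> X s n = 0" and k: "1 \<le> k"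
  shows "Ak k X q (int (k - 1)) = X (int k - q - 1) 0 + of_nat k / 2 * X (int k - q - 1) 1"
proof -
  have "Ak k X q (int (k - 1)) = (\<Sum>r\<le>Suc k. Dk k r / fact r * X (int k - q - 1) (int r - int (k - 1) - 1))"
    by (rule Ak_Dk[where N=2]) (use X k in auto)
  also have "\<dots> = (\<Sum>r<k. Dk k r / fact r * X (int k - q - 1) (int r - int (k - 1) - 1))
      + Dk k k / fact k * X (int k - q - 1) (int k - int (k - 1) - 1)
      + Dk k (Suc k) / fact (Suc k) * X (int k - q - 1) (int (Suc k) - int (k - 1) - 1)"
    by (simp add: lessThan_Suc_atMost[symmetric])
  also have "(\<Sum>r<k. Dk k r / fact r * X (int k - q - 1) (int r - int (k - 1) - 1)) = 0"
    by (intro sum.neutral) (auto simp: Dk_zero)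
  also have "int k - int (k - 1) - 1 = 0" using k by simp
  also have "int (Suc k) - int (k - 1) - 1 = 1" using k by simp
  finally show ?thesis by (simp add: Dk_kk Dk_k1 del: fact_Suc)
qed

lemma COMM:
  fixes P1 P2 X1 :: "int \<Rightarrow> int \<Rightarrow> complex"
  assumes k: "2 \<le> k"
    and t1: "\<And>i j. j < B \<Longrightarrow> P1 i j = 0"
    and t2: "\<And>i j. j < B \<Longrightarrow> P2 i j = 0"
    and loc: "\<And>i j. FF k P1 i j = (-1)^k * FF k P2 j i"
    and g1: "good k P1 X1"
    and X: "\<And>s n. 2 \<le> n \<Longrightarrow> X1 s n = 0"
  shows "P1 i j - P2 j i = X1 (- i - j - 1) 0 - of_int i * X1 (- i - j - 1) 1"
proof -
  obtain A1 where A1: "\<And>i j. i < A1 \<or> j < A1 \<Longrightarrow> FF k P1 i j = 0"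
    and m1: "\<And>q p. mom (FF k P1) q p = fact p * Ak k X1 q (int p)"
    using g1 unfolding good_def by blast
  define q where "q = i + j + int k"
  define L where "L = min (min A1 B) i"
  define U where "U = max (max (q - A1) (q - B)) (i + int k)"
  define f where "f x = FF k P1 x (q - x)" for x
  define K where "K = k - 1"
  have K1: "1 \<le> K" using k unfolding K_def by simp
  have M: "(\<Sum>x\<in>{L..U}. f x * of_int x ^ t) = fact t * Ak k X1 q (int t)" for t
  proof -
    have "(\<Sum>x\<in>{L..U}. f x * of_int x ^ t) = mom (FF k P1) q t"
      unfolding f_def by (rule mom_interval[symmetric, OF A1]) (auto simp: L_def U_def)
    then show ?thesis by (simp add: m1)
  qed
  have "P1 i j - P2 j i = (\<Sum>x\<in>{L..U}. FF k P1 x (i + j + int k - x) * (of_int (x - i - 1) gchoose (k - 1)))"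
    by (rule KERNEL[OF _ t1 t2 loc]) (use k in \<open>auto simp: L_def U_def q_def\<close>)
  also have "\<dots> = (\<Sum>x\<in>{L..U}. f x * ((of_int x - (of_int i + 1)) gchoose K))"
    unfolding f_def q_def K_def by (intro sum.cong refl) (simp add: algebra_simps)
  also have "\<dots> = ((\<Sum>x\<in>{L..U}. f x * of_int x ^ K)
      - (\<Sum>l<K. (of_int i + 1) + of_nat l) * (\<Sum>x\<in>{L..U}. f x * of_int x ^ (K - 1))) / fact K"
  proof (rule moment_gchoose[OF K1])
    fix t assume "t + 1 < K"
    then have "t + 3 \<le> k" unfolding K_def by simp
    then show "(\<Sum>x\<in>{L..U}. f x * of_int x ^ t) = 0" by (simp add: M Ak_low[OF X])
  qed
  also have "(\<Sum>x\<in>{L..U}. f x * of_int x ^ K) = fact K * (X1 (int k - q - 1) 0 + of_nat k / 2 * X1 (int k - q - 1) 1)"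
  proof -
    have k1: "1 \<le> k" using k by simp
    have e: "Ak k X1 q (int (k - 1)) = X1 (int k - q - 1) 0 + of_nat k / 2 * X1 (int k - q - 1) 1"
      by (rule Ak_km1[OF X k1])
    show ?thesis unfolding M K_def e ..
  qed
  also have "(\<Sum>x\<in>{L..U}. f x * of_int x ^ (K - 1)) = fact (K - 1) * X1 (int k - q - 1) 1"
  proof -
    have "K - 1 = k - 2" unfolding K_def by simp
    then show ?thesis unfolding M using Ak_km2[OF X k] by simp
  qed
  also have "(\<Sum>l<K. (of_int i + 1) + of_nat l) = of_nat K * (of_int i + 1) + of_nat K * (of_nat K - 1) / (2 :: complex)"
    by (rule sum_lin)
  also have "int k - q - 1 = - i - j - 1" unfolding q_def by simp
  finally have E: "P1 i j - P2 j i = (fact K * (X1 (- i - j - 1) 0 + of_nat k / 2 * X1 (- i - j - 1) 1)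
      - (of_nat K * (of_int i + 1) + of_nat K * (of_nat K - 1) / 2) * (fact (K - 1) * X1 (- i - j - 1) 1)) / fact K" .
  have fK: "fact K = of_nat K * (fact (K - 1) :: complex)"
    using K1 by (metis fact_nonzero fact_num_eq_if of_nat_eq_0_iff not_one_le_zero)
  have kK: "(of_nat k :: complex) = of_nat K + 1" unfolding K_def using k by (simp add: of_nat_diff)
  have nz: "(fact (K - 1) :: complex) \<noteq> 0" by simp
  have nzK: "(of_nat K :: complex) \<noteq> 0" using K1 by simp
  show ?thesis unfolding E fK kK using nz nzK by (simp add: field_simps)
qed

lemma linD:
  assumes "Vector_Spaces.linear s1 s2 f"
  shows "f (x + y) = f x + f y" "f (s1 c x) = s2 c (f x)" "f 0 = 0" "f (x - y) = f x - f y"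
    "f (sum g A) = (\<Sum>a\<in>A. f (g a))" "f (- x) = - f x"
proof -
  interpret module_hom s1 s2 f using assms by (simp add: module_hom_iff_linear)
  show "f (x + y) = f x + f y" by (rule add)
  show "f (s1 c x) = s2 c (f x)" by (rule scale)
  show "f 0 = 0" by (rule zero)
  show "f (x - y) = f x - f y" by (rule diff)
  show "f (sum g A) = (\<Sum>a\<in>A. f (g a))" by (rule sum)
  show "f (- x) = - f x" by (rule neg)
qed

locale vsetup =
  fixes scV :: "complex \<Rightarrow> 'v::ab_group_add \<Rightarrow> 'v" and vac :: 'v and Y :: "'v \<Rightarrow> int \<Rightarrow> 'v \<Rightarrow> 'v"
    and scW :: "complex \<Rightarrow> 'w::ab_group_add \<Rightarrow> 'w" and YW :: "'v \<Rightarrow> int \<Rightarrow> 'w \<Rightarrow> 'w"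
    and \<phi> :: "'w \<Rightarrow> complex" and w :: 'w
  assumes VA: "vertex_algebra scV vac Y" and MOD: "phi_coord_module scV vac Y scW YW"
    and LIN: "Vector_Spaces.linear scW (*) \<phi>"
begin

definition PP :: "'v \<Rightarrow> 'v \<Rightarrow> int \<Rightarrow> int \<Rightarrow> complex" where
  "PP u v i j = \<phi> (YW u (- i - 1) (YW v (- j - 1) w))"

definition XX :: "'v \<Rightarrow> 'v \<Rightarrow> int \<Rightarrow> int \<Rightarrow> complex" where
  "XX u v s n = \<phi> (YW (Y u n v) s w)"

lemma VA_lin1: "Vector_Spaces.linear scV scV (\<lambda>u. Y u n v)" using VA unfolding vertex_algebra_def by blast
lemma VA_lin2: "Vector_Spaces.linear scV scV (Y u n)" using VA unfolding vertex_algebra_def by blast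
lemma VA_trunc: "\<exists>N. \<forall>n\<ge>N. Y u n v = 0" using VA unfolding vertex_algebra_def by blast
lemma VA_vac: "Y vac n v = (if n = -1 then v else 0)" using VA unfolding vertex_algebra_def by blast
lemma VA_cre: "n \<ge> 0 \<Longrightarrow> Y u n vac = 0" using VA unfolding vertex_algebra_def by blast
lemma VA_cre1: "Y u (-1) vac = u" using VA unfolding vertex_algebra_def by blast
lemma VA_borch: "(\<Sum>i\<in>{i::nat. Y u (l + int i) v \<noteq> 0}.
            scV ((of_int m :: complex) gchoose i) (Y (Y u (l + int i) v) (m + n - int i) x))
        = (\<Sum>i\<in>{i::nat. Y v (n + int i) x \<noteq> 0}.
            scV ((-1) ^ i * ((of_int l :: complex) gchoose i)) (Y u (l + m - int i) (Y v (n + int i) x)))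
        - (\<Sum>i\<in>{i::nat. Y u (m + int i) x \<noteq> 0}.
            scV ((-1) ^ i * ((of_int l :: complex) gchoose i) * ((-1) powi l))
               (Y v (l + n - int i) (Y u (m + int i) x)))"
  using VA unfolding vertex_algebra_def by blast
lemma VA_vs: "vector_space scV" using VA unfolding vertex_algebra_def by blast

lemma M_vs: "vector_space scW" using MOD unfolding phi_coord_module_def by blast
lemma M_lin1: "Vector_Spaces.linear scV scW (\<lambda>v. YW v n x)" using MOD unfolding phi_coord_module_def by blast
lemma M_lin2: "Vector_Spaces.linear scW scW (YW v n)" using MOD unfolding phi_coord_module_def by blast
lemma M_trunc: "\<exists>N. \<forall>n\<ge>N. YW v n x = 0" using MOD unfolding phi_coord_module_def by blast
lemma M_vac: "YW vac n x = (if n = -1 then x else 0)" using MOD unfolding phi_coord_module_def by blast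
lemma M_pair: "\<exists>k::nat.
        (\<forall>x. \<exists>A B. \<forall>i j. i < A \<or> j < B \<longrightarrow> prod_coeff scW YW u v k x i j = 0) \<and>
        (\<forall>x q p. assoc_coeff scW Y YW u v k x q p = subst_coeff scW YW u v k x q p)"
  using MOD unfolding phi_coord_module_def by blast

lemma YW0: "YW u n 0 = 0" using linD(3)[OF M_lin2] .
lemma YW0': "YW 0 n x = 0" using linD(3)[OF M_lin1[of n x]] .
lemma Y0: "Y u n 0 = 0" using linD(3)[OF VA_lin2] .
lemma Y0': "Y 0 n v = 0" using linD(3)[OF VA_lin1[of n v]] .
lemma phi0: "\<phi> 0 = 0" using linD(3)[OF LIN] .

lemma XX_trunc: "\<exists>N. \<forall>s n. N \<le> n \<longrightarrow> XX u v s n = 0"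
proof -
  obtain N where N: "\<forall>n\<ge>N. Y u n v = 0" using VA_trunc by blast
  show ?thesis unfolding XX_def
  proof (intro exI[of _ N] allI impI)
    fix s n assume "N \<le> n"
    then have "Y u n v = 0" using N by auto
    then show "\<phi> (YW (Y u n v) s w) = 0" by (simp add: YW0' phi0)
  qed
qed

lemma PP_trunc: "\<exists>B. \<forall>i j. j < B \<longrightarrow> PP u v i j = 0"
proof -
  obtain N where N: "\<forall>n\<ge>N. YW v n w = 0" using M_trunc by blast
  show ?thesis
  proof (intro exI allI impI)
    fix i j assume "j < - N"
    then have "YW v (- j - 1) w = 0" using N by auto
    then show "PP u v i j = 0" unfolding PP_def by (simp add: YW0 phi0)
  qed
qed

lemma FF_prod: "FF k (PP u v) i j = \<phi> (prod_coeff scW YW u v k w i j)"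
proof -
  have "\<phi> (prod_coeff scW YW u v k w i j) = (\<Sum>p\<in>{0..k}. of_nat (k choose p) * (-1) ^ p *
        \<phi> (YW u (int k - int p - i - 1) (YW v (int p - j - 1) w)))"
    unfolding prod_coeff_def by (simp add: linD(2,5)[OF LIN])
  also have "\<dots> = FF k (PP u v) i j"
    unfolding FF_def PP_def atLeast0AtMost by (intro sum.cong refl) (simp add: algebra_simps)
  finally show ?thesis ..
qed

lemma good_exists: "\<exists>k. good k (PP u v) (XX u v)"
proof -
  obtain k where tr: "\<forall>x. \<exists>A B. \<forall>i j. i < A \<or> j < B \<longrightarrow> prod_coeff scW YW u v k x i j = 0"
    and as: "\<forall>x q p. assoc_coeff scW Y YW u v k x q p = subst_coeff scW YW u v k x q p"
    using M_pair by blast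
  obtain A B where AB: "\<forall>i j. i < A \<or> j < B \<longrightarrow> prod_coeff scW YW u v k w i j = 0" using tr by blast
  define A' where "A' = min A B"
  have T: "FF k (PP u v) i j = 0" if "i < A' \<or> j < A'" for i j
    using AB that by (auto simp: FF_prod A'_def phi0)
  obtain N where N: "\<forall>n\<ge>N. Y u n v = 0" using VA_trunc by blast
  have assoc: "\<phi> (assoc_coeff scW Y YW u v k w q p) = Ak k (XX u v) q p" for q p
  proof -
    define SV where "SV = {r::nat. Y u (int r - p - 1) v \<noteq> 0}"
    define SX where "SX = {r::nat. XX u v (int k - q - 1) (int r - p - 1) \<noteq> 0}"
    have fSV: "finite SV"
    proof (rule finite_subset)
      show "SV \<subseteq> {..nat (\<bar>N\<bar> + \<bar>p\<bar>)}"
      proof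
        fix r assume "r \<in> SV"
        then have "\<not> N \<le> int r - p - 1" using N unfolding SV_def by auto
        then show "r \<in> {..nat (\<bar>N\<bar> + \<bar>p\<bar>)}" by auto
      qed
    qed auto
    have sub: "SX \<subseteq> SV" unfolding SX_def SV_def XX_def by (auto simp: YW0' phi0)
    have "\<phi> (assoc_coeff scW Y YW u v k w q p) = (\<Sum>j\<in>{0..k}. \<Sum>r\<in>SV.
        of_nat (k choose j) * (-1) ^ (k - j) * of_nat j ^ r / fact r * XX u v (int k - q - 1) (int r - p - 1))"
      unfolding assoc_coeff_def XX_def SV_def by (simp add: linD(2,5)[OF LIN])
    also have "\<dots> = (\<Sum>j\<in>{0..k}. of_nat (k choose j) * (-1) ^ (k - j) *
        (\<Sum>r\<in>SX. of_nat j ^ r / fact r * XX u v (int k - q - 1) (int r - p - 1)))"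
    proof (intro sum.cong refl)
      fix j
      have "(\<Sum>r\<in>SV. of_nat (k choose j) * (-1) ^ (k - j) * of_nat j ^ r / fact r * XX u v (int k - q - 1) (int r - p - 1))
          = (\<Sum>r\<in>SX. of_nat (k choose j) * (-1) ^ (k - j) * of_nat j ^ r / fact r * XX u v (int k - q - 1) (int r - p - 1))"
        by (rule sum.mono_neutral_right[OF fSV sub]) (auto simp: SX_def)
      then show "(\<Sum>r\<in>SV. of_nat (k choose j) * (-1) ^ (k - j) * of_nat j ^ r / fact r * XX u v (int k - q - 1) (int r - p - 1))
          = of_nat (k choose j) * (-1) ^ (k - j) * (\<Sum>r\<in>SX. of_nat j ^ r / fact r * XX u v (int k - q - 1) (int r - p - 1))"
        by (simp add: sum_distrib_left mult_ac)
    qed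
    also have "\<dots> = Ak k (XX u v) q p"
      unfolding Ak_def Phi_def SX_def atLeast0AtMost ..
    finally show ?thesis .
  qed
  have subst: "\<phi> (subst_coeff scW YW u v k w q (int p)) = mom (FF k (PP u v)) q p / fact p" for q p
  proof -
    define SW where "SW = {i. prod_coeff scW YW u v k w i (q - i) \<noteq> 0}"
    define SM where "SM = {i. FF k (PP u v) i (q - i) \<noteq> 0}"
    have fSW: "finite SW"
    proof (rule finite_subset)
      show "SW \<subseteq> {A'..q - A'}"
      proof
        fix i assume "i \<in> SW"
        then have "\<not> (i < A \<or> q - i < B)" using AB unfolding SW_def by blast
        then show "i \<in> {A'..q - A'}" unfolding A'_def by auto
      qed
    qed auto
    have sub: "SM \<subseteq> SW" unfolding SM_def SW_def by (auto simp: FF_prod phi0)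
    have "\<phi> (subst_coeff scW YW u v k w q (int p)) = (\<Sum>i\<in>SW. of_int i ^ p / fact p * \<phi> (prod_coeff scW YW u v k w i (q - i)))"
      unfolding subst_coeff_def SW_def by (simp add: linD(2,5)[OF LIN])
    also have "\<dots> = (\<Sum>i\<in>SM. of_int i ^ p / fact p * FF k (PP u v) i (q - i))"
      unfolding FF_prod by (rule sum.mono_neutral_right[OF fSW sub]) (auto simp: SM_def FF_prod)
    also have "\<dots> = mom (FF k (PP u v)) q p / fact p"
      unfolding mom_def SM_def by (simp add: sum_divide_distrib mult_ac)
    finally show ?thesis .
  qed
  have 2: "mom (FF k (PP u v)) q p = fact p * Ak k (XX u v) q (int p)" for q p
  proof -
    have "Ak k (XX u v) q (int p) = mom (FF k (PP u v)) q p / fact p"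
      using as assoc subst by metis
    then show ?thesis by simp
  qed
  have 3: "Ak k (XX u v) q p = 0" if "p < 0" for q p
  proof -
    have "Ak k (XX u v) q p = \<phi> (subst_coeff scW YW u v k w q p)" using as assoc by metis
    also have "\<dots> = 0" using that by (simp add: subst_coeff_def phi0)
    finally show ?thesis .
  qed
  have "good k (PP u v) (XX u v)" unfolding good_def using T 2 3 by blast
  then show ?thesis ..
qed

end

lemma Dk_uniq:
  fixes e :: "nat \<Rightarrow> complex"
  assumes h: "\<And>p. (\<Sum>r\<le>p. Dk k r / fact r * e (p - r)) = 0"
  shows "e j = 0"
proof (induction j rule: less_induct)
  case (less j)
  have "0 = (\<Sum>r\<le>j + k. Dk k r / fact r * e (j + k - r))" using h[of "j + k"] by simp
  also have "\<dots> = (\<Sum>r\<in>{k}. Dk k r / fact r * e (j + k - r))"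
  proof (rule sum.mono_neutral_right)
    show "\<forall>r\<in>{..j + k} - {k}. Dk k r / fact r * e (j + k - r) = 0"
    proof
      fix r assume r: "r \<in> {..j + k} - {k}"
      show "Dk k r / fact r * e (j + k - r) = 0"
      proof (cases "r < k")
        case True then show ?thesis by (simp add: Dk_zero)
      next
        case False
        with r have "j + k - r < j" by auto
        then show ?thesis by (simp add: less.IH)
      qed
    qed
  qed auto
  also have "\<dots> = e j" by (simp add: Dk_kk)
  finally show ?case by simp
qed

lemma Dk_exist:
  "(\<Sum>r\<le>p. Dk k r / fact r * (mu ^ (p - r) / fact (p - r)))
   = (\<Sum>l\<le>k. of_nat (k choose l) * (-1) ^ (k - l) * (of_nat l + mu) ^ p) / fact p"
proof -
  have "(\<Sum>r\<le>p. Dk k r / fact r * (mu ^ (p - r) / fact (p - r)))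
      = (\<Sum>l\<le>k. of_nat (k choose l) * (-1) ^ (k - l) * (\<Sum>r\<le>p. of_nat l ^ r / fact r * (mu ^ (p - r) / fact (p - r))))"
    unfolding Dk_def by (simp add: sum_distrib_left sum_distrib_right sum_divide_distrib mult_ac sum.swap[of _ "{..k}"])
  also have "\<dots> = (\<Sum>l\<le>k. of_nat (k choose l) * (-1) ^ (k - l) * ((of_nat l + mu) ^ p / fact p))"
    by (intro sum.cong refl) (simp add: exp_binom[of mu "of_nat _" p] add.commute)
  finally show ?thesis by (simp add: sum_divide_distrib)
qed

context vsetup begin

lemma PP_vac: "PP c vac i j = (if j = 0 then \<phi> (YW c (- i - 1) w) else 0)"
  unfolding PP_def by (simp add: M_vac YW0 phi0)

lemma FF_vac: "FF k (PP c vac) i j = (if 0 \<le> j \<and> j \<le> int k then of_nat (k choose nat j) * (-1) ^ nat j * \<phi> (YW c (int k - j - i - 1) w) else 0)"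
proof -
  have "FF k (PP c vac) i j = (\<Sum>p\<le>k. if p = nat j \<and> 0 \<le> j then of_nat (k choose p) * (-1) ^ p * \<phi> (YW c (int k - j - i - 1) w) else 0)"
    unfolding FF_def PP_vac by (intro sum.cong refl) (auto simp: algebra_simps)
  also have "\<dots> = (if 0 \<le> j \<and> j \<le> int k then of_nat (k choose nat j) * (-1) ^ nat j * \<phi> (YW c (int k - j - i - 1) w) else 0)"
    by (cases "0 \<le> j") (auto simp: sum.delta nat_le_iff)
  finally show ?thesis .
qed

lemma Dlemma: "\<phi> (YW (Y c (- int j - 1) vac) s w) = (- (of_int s + 1)) ^ j / fact j * \<phi> (YW c s w)"
proof -
  obtain k where g: "good k (PP c vac) (XX c vac)" using good_exists by blast
  obtain A where A: "\<And>i j. i < A \<or> j < A \<Longrightarrow> FF k (PP c vac) i j = 0"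
    and m: "\<And>q p. mom (FF k (PP c vac)) q p = fact p * Ak k (XX c vac) q (int p)"
    using g unfolding good_def by blast
  define q where "q = int k - s - 1"
  have s: "s = int k - q - 1" unfolding q_def by simp
  define yc where "yc = \<phi> (YW c s w)"
  define mu where "mu = (of_int q - of_nat k :: complex)"
  have mu: "mu = - (of_int s + 1)" unfolding mu_def q_def by simp
  define d where "d j = XX c vac s (- int j - 1)" for j
  define d' where "d' j = mu ^ j / fact j * yc" for j
  have momv: "mom (FF k (PP c vac)) q p = (\<Sum>l\<le>k. of_nat (k choose l) * (-1) ^ (k - l) * (of_nat l + mu) ^ p) * yc" for p
  proof -
    define L where "L = min A (q - int k)"
    define U where "U = max (q - A) q"
    have "mom (FF k (PP c vac)) q p = (\<Sum>i\<in>{L..U}. FF k (PP c vac) i (q - i) * of_int i ^ p)"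
      by (rule mom_interval[OF A]) (auto simp: L_def U_def)
    also have "\<dots> = (\<Sum>i\<in>{q - int k..q}. FF k (PP c vac) i (q - i) * of_int i ^ p)"
      by (rule sum.mono_neutral_right) (auto simp: L_def U_def FF_vac)
    also have "\<dots> = (\<Sum>l\<le>k. FF k (PP c vac) (q - int k + int l) (int k - int l) * of_int (q - int k + int l) ^ p)"
      by (subst sum_int_up) (auto simp: algebra_simps)
    also have "\<dots> = (\<Sum>l\<le>k. of_nat (k choose l) * (-1) ^ (k - l) * (of_nat l + mu) ^ p * yc)"
    proof (intro sum.cong refl)
      fix l assume l: "l \<in> {..k}"
      have "nat (int k - int l) = k - l" by simp
      moreover have "k choose (k - l) = k choose l" using binomial_symmetric[of l k] l by simp
      moreover have "int k - (int k - int l) - (q - int k + int l) - 1 = s" unfolding s by simp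
      moreover have "(of_int (q - int k + int l) :: complex) = of_nat l + mu" unfolding mu_def by simp
      ultimately show "FF k (PP c vac) (q - int k + int l) (int k - int l) * of_int (q - int k + int l) ^ p
          = of_nat (k choose l) * (-1) ^ (k - l) * (of_nat l + mu) ^ p * yc"
        using l unfolding FF_vac yc_def by (simp add: add.commute)
    qed
    finally show ?thesis by (simp add: sum_distrib_right)
  qed
  have eq: "(\<Sum>r\<le>p. Dk k r / fact r * d (p - r)) = (\<Sum>r\<le>p. Dk k r / fact r * d' (p - r))" for p
  proof -
    have "Ak k (XX c vac) q (int p) = (\<Sum>r\<le>p. Dk k r / fact r * XX c vac (int k - q - 1) (int r - int p - 1))"
      by (rule Ak_Dk[where N=0]) (auto simp: XX_def VA_cre YW0' phi0)
    also have "\<dots> = (\<Sum>r\<le>p. Dk k r / fact r * d (p - r))"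
      unfolding d_def s[symmetric] by (intro sum.cong refl) (auto simp: of_nat_diff)
    finally have 1: "fact p * (\<Sum>r\<le>p. Dk k r / fact r * d (p - r)) = mom (FF k (PP c vac)) q p"
      by (simp add: m)
    have 2: "(\<Sum>r\<le>p. Dk k r / fact r * d' (p - r)) = (\<Sum>l\<le>k. of_nat (k choose l) * (-1) ^ (k - l) * (of_nat l + mu) ^ p) / fact p * yc"
    proof -
      have "(\<Sum>r\<le>p. Dk k r / fact r * d' (p - r)) = (\<Sum>r\<le>p. Dk k r / fact r * (mu ^ (p - r) / fact (p - r))) * yc"
        unfolding d'_def sum_distrib_right by (intro sum.cong refl) simp
      then show ?thesis unfolding Dk_exist .
    qed
    have "fact p * (\<Sum>r\<le>p. Dk k r / fact r * d (p - r)) = fact p * (\<Sum>r\<le>p. Dk k r / fact r * d' (p - r))"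
      unfolding 1 2 momv by simp
    then show ?thesis by simp
  qed
  have "d j - d' j = 0"
  proof (rule Dk_uniq[where k=k])
    fix p
    have "(\<Sum>r\<le>p. Dk k r / fact r * (d (p - r) - d' (p - r)))
       = (\<Sum>r\<le>p. Dk k r / fact r * d (p - r)) - (\<Sum>r\<le>p. Dk k r / fact r * d' (p - r))"
      by (simp only: right_diff_distrib sum_subtractf)
    then show "(\<Sum>r\<le>p. Dk k r / fact r * (d (p - r) - d' (p - r))) = 0" using eq[of p] by simp
  qed
  then show ?thesis unfolding d_def d'_def yc_def mu XX_def by simp
qed

end

context vsetup begin

lemma scV0: "scV c 0 = 0"
proof -
  interpret vector_space scV by (rule VA_vs)
  show ?thesis by simp
qed

lemma scV_scV: "scV a (scV b x) = scV (a * b) x"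
proof -
  interpret vector_space scV by (rule VA_vs)
  show ?thesis by simp
qed

lemma scV_one: "scV 1 x = x"
proof -
  interpret vector_space scV by (rule VA_vs)
  show ?thesis by simp
qed

lemma scV_neg: "scV c (- x) = - scV c x"
proof -
  interpret vector_space scV by (rule VA_vs)
  show ?thesis by (simp add: scale_minus_right)
qed

lemma Vskew: "scV ((-1) powi n) (Y a n b) =
   - (\<Sum>i\<in>{i::nat. Y b (n + int i) a \<noteq> 0}. scV ((-1) ^ i) (Y (Y b (n + int i) a) (- int i - 1) vac))"
proof -
  have B: "(\<Sum>i\<in>{i::nat. Y b (n + int i) a \<noteq> 0}.
            scV ((of_int (-1) :: complex) gchoose i) (Y (Y b (n + int i) a) (-1 + 0 - int i) vac))
        = (\<Sum>i\<in>{i::nat. Y a (0 + int i) vac \<noteq> 0}.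
            scV ((-1) ^ i * ((of_int n :: complex) gchoose i)) (Y b (n + -1 - int i) (Y a (0 + int i) vac)))
        - (\<Sum>i\<in>{i::nat. Y b (-1 + int i) vac \<noteq> 0}.
            scV ((-1) ^ i * ((of_int n :: complex) gchoose i) * ((-1) powi n))
               (Y a (n + 0 - int i) (Y b (-1 + int i) vac)))"
    by (rule VA_borch)
  have S1: "{i::nat. Y a (0 + int i) vac \<noteq> 0} = {}" by (auto simp: VA_cre)
  have S2: "(\<Sum>i\<in>{i::nat. Y b (-1 + int i) vac \<noteq> 0}.
            scV ((-1) ^ i * ((of_int n :: complex) gchoose i) * ((-1) powi n))
               (Y a (n + 0 - int i) (Y b (-1 + int i) vac))) = scV ((-1) powi n) (Y a n b)"
  proof -
    have "(\<Sum>i\<in>{i::nat. Y b (-1 + int i) vac \<noteq> 0}.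
            scV ((-1) ^ i * ((of_int n :: complex) gchoose i) * ((-1) powi n))
               (Y a (n + 0 - int i) (Y b (-1 + int i) vac)))
        = (\<Sum>i\<in>{0}. scV ((-1) ^ i * ((of_int n :: complex) gchoose i) * ((-1) powi n))
               (Y a (n + 0 - int i) (Y b (-1 + int i) vac)))"
    proof (rule sum.mono_neutral_cong_left)
      show "{i::nat. Y b (-1 + int i) vac \<noteq> 0} \<subseteq> {0}"
      proof
        fix i assume "i \<in> {i::nat. Y b (-1 + int i) vac \<noteq> 0}"
        then have ne: "Y b (-1 + int i) vac \<noteq> 0" by simp
        show "i \<in> {0}"
        proof (rule ccontr)
          assume "i \<notin> {0}"
          then have "0 \<le> -1 + int i" by auto
          then have "Y b (-1 + int i) vac = 0" by (rule VA_cre)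
          with ne show False by simp
        qed
      qed
    qed (auto simp: VA_cre1 Y0 scV0)
    then show ?thesis by (simp add: VA_cre1)
  qed
  have G: "(of_int (-1) :: complex) gchoose i = (-1) ^ i" for i
    using gbinomial_minus[of "1 :: complex" i] by (simp add: binomial_gbinomial[symmetric])
  have "(\<Sum>i\<in>{i::nat. Y b (n + int i) a \<noteq> 0}. scV ((-1) ^ i) (Y (Y b (n + int i) a) (- int i - 1) vac))
      = - scV ((-1) powi n) (Y a n b)"
  proof -
    have idx: "(-1 + 0 - int i) = (- int i - 1)" for i :: nat by simp
    show ?thesis using B unfolding S1 S2 G idx by simp
  qed
  then show ?thesis by simp
qed

lemma Vskew': "Y a n b =
   - scV ((-1) powi n) (\<Sum>i\<in>{i::nat. Y b (n + int i) a \<noteq> 0}. scV ((-1) ^ i) (Y (Y b (n + int i) a) (- int i - 1) vac))"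
proof -
  have "Y a n b = scV ((-1) powi n) (scV ((-1) powi n) (Y a n b))"
    by (simp add: scV_scV scV_one)
  also have "\<dots> = - scV ((-1) powi n) (\<Sum>i\<in>{i::nat. Y b (n + int i) a \<noteq> 0}. scV ((-1) ^ i) (Y (Y b (n + int i) a) (- int i - 1) vac))"
    unfolding Vskew scV_neg ..
  finally show ?thesis .
qed

lemma Xskew:
  assumes N: "\<And>m. N \<le> m \<Longrightarrow> Y b m a = 0" and J: "N \<le> n + int J"
  shows "XX a b s n = - ((-1) powi n) * (\<Sum>j\<le>J. (of_int s + 1) ^ j / fact j * XX b a s (n + int j))"
proof -
  define S where "S = {i::nat. Y b (n + int i) a \<noteq> 0}"
  have fS: "S \<subseteq> {..J}"
  proof
    fix i assume "i \<in> S"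
    then have "\<not> N \<le> n + int i" using N unfolding S_def by auto
    then show "i \<in> {..J}" using J by auto
  qed
  have "XX a b s n = - ((-1) powi n) * (\<Sum>i\<in>S. (-1) ^ i * \<phi> (YW (Y (Y b (n + int i) a) (- int i - 1) vac) s w))"
    unfolding XX_def S_def
    by (subst Vskew') (simp add: linD(2,5,6)[OF M_lin1] linD(2,5,6)[OF LIN])
  also have "\<dots> = - ((-1) powi n) * (\<Sum>i\<in>S. (of_int s + 1) ^ i / fact i * XX b a s (n + int i))"
  proof -
    have "(-1) ^ i * \<phi> (YW (Y (Y b (n + int i) a) (- int i - 1) vac) s w) = (of_int s + 1) ^ i / fact i * XX b a s (n + int i)" for i
    proof -
      have gen: "(-1) ^ i * (- x) ^ i = (x ^ i :: complex)" for x
        by (induction i) (auto simp: algebra_simps)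
      have "(-1) ^ i * (- (of_int s + 1)) ^ i = ((of_int s + 1) ^ i :: complex)"
        by (rule gen)
      moreover have "(-1) ^ i * ((- (of_int s + 1)) ^ i / fact i * \<phi> (YW (Y b (n + int i) a) s w))
          = ((-1) ^ i * (- (of_int s + 1)) ^ i) / fact i * \<phi> (YW (Y b (n + int i) a) s w)"
        by (simp add: field_simps)
      ultimately show ?thesis unfolding Dlemma XX_def by simp
    qed
    then show ?thesis by simp
  qed
  also have "(\<Sum>i\<in>S. (of_int s + 1) ^ i / fact i * XX b a s (n + int i))
      = (\<Sum>j\<le>J. (of_int s + 1) ^ j / fact j * XX b a s (n + int j))"
    by (rule sum.mono_neutral_left) (use fS in \<open>auto simp: S_def XX_def YW0' phi0\<close>)
  finally show ?thesis .
qed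

end

lemma good_mono:
  assumes N: "\<And>s n. N \<le> n \<Longrightarrow> X s n = 0" and g: "good k P X" and kk: "k \<le> k'"
  shows "good k' P X"
  using kk
proof (induction k' rule: dec_induct)
  case base then show ?case by (rule g)
next
  case (step m) then show ?case using good_Suc[where N=N and X=X, OF N] by blast
qed

context vsetup begin

lemma comm_W:
  assumes X2: "\<And>n. 2 \<le> n \<Longrightarrow> Y a n b = 0"
  shows "PP a b i j - PP b a j i = XX a b (- i - j - 1) 0 - of_int i * XX a b (- i - j - 1) 1"
proof -
  obtain k1 where g1: "good k1 (PP a b) (XX a b)" using good_exists by blast
  obtain k2 where g2: "good k2 (PP b a) (XX b a)" using good_exists by blast
  obtain Na where Na: "\<forall>n\<ge>Na. Y a n b = 0" using VA_trunc by blast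
  obtain Nb where Nb: "\<forall>n\<ge>Nb. Y b n a = 0" using VA_trunc by blast
  define N where "N = max Na Nb"
  have YN1: "Y a n b = 0" if "N \<le> n" for n using Na that unfolding N_def by auto
  have YN2: "Y b n a = 0" if "N \<le> n" for n using Nb that unfolding N_def by auto
  have XN1: "XX a b s n = 0" if "N \<le> n" for s n using YN1[OF that] unfolding XX_def by (simp add: YW0' phi0)
  have XN2: "XX b a s n = 0" if "N \<le> n" for s n using YN2[OF that] unfolding XX_def by (simp add: YW0' phi0)
  define K where "K = max (max k1 k2) 2"
  have G1: "good K (PP a b) (XX a b)" by (rule good_mono[OF _ g1, where N=N]) (auto simp: XN1 K_def)
  have G2: "good K (PP b a) (XX b a)" by (rule good_mono[OF _ g2, where N=N]) (auto simp: XN2 K_def)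
  have loc: "FF K (PP a b) i j = (-1)^K * FF K (PP b a) j i" for i j
  proof (rule LOC[where N=N, OF _ _ _ G1 G2])
    show "\<And>s n. N \<le> n \<Longrightarrow> XX a b s n = 0" by (rule XN1)
    show "\<And>s n. N \<le> n \<Longrightarrow> XX b a s n = 0" by (rule XN2)
    show "\<And>s n J. N \<le> n + int J \<Longrightarrow> XX a b s n = - ((-1) powi n) * (\<Sum>j\<le>J. (of_int s + 1) ^ j / fact j * XX b a s (n + int j))"
      by (rule Xskew[OF YN2])
  qed
  obtain B1 where B1: "\<forall>i j. j < B1 \<longrightarrow> PP a b i j = 0" using PP_trunc by blast
  obtain B2 where B2: "\<forall>i j. j < B2 \<longrightarrow> PP b a i j = 0" using PP_trunc by blast
  show ?thesis
  proof (rule COMM[where B="min B1 B2", OF _ _ _ loc G1])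
    show "2 \<le> K" unfolding K_def by simp
    show "\<And>i j. j < min B1 B2 \<Longrightarrow> PP a b i j = 0" using B1 by auto
    show "\<And>i j. j < min B1 B2 \<Longrightarrow> PP b a i j = 0" using B2 by auto
    show "\<And>s n. 2 \<le> n \<Longrightarrow> XX a b s n = 0" unfolding XX_def by (simp add: X2 YW0' phi0)
  qed
qed

end

context vsetup begin

lemma scV_zero: "scV 0 x = 0"
proof -
  interpret vector_space scV by (rule VA_vs)
  show ?thesis by simp
qed

lemma XXlin:
  "\<phi> (YW (scV c1 u1 + scV c2 u2) s w) = c1 * \<phi> (YW u1 s w) + c2 * \<phi> (YW u2 s w)"
  by (simp add: linD(1,2)[OF M_lin1] linD(1,2)[OF LIN])

lemma bracket_gen:
  assumes YA: "\<And>n. Y (A m (-1) vac) n = A m n" and YC: "\<And>n. Y (C (m + r) (-1) vac) n = C (m + r) n"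
    and com: "\<And>n s x. A m n (B r s x) - B r s (A m n x) =
        scV (of_int (n * r - m * s)) (C (m + r) (n + s - 1) x)
        + scV ((if m + r = 0 \<and> n + s + 1 = 0 then of_int m * la else 0)
              + (if m + r = 0 \<and> n + s = 0 then of_int n * lb else 0)) x"
    and Avac: "\<And>n. 0 \<le> n \<Longrightarrow> A m n vac = 0" and Cvac: "\<And>n. 0 \<le> n \<Longrightarrow> C (m + r) n vac = 0"
    and B0: "B r (-1) 0 = 0"
  shows "\<phi> (YW (A m (-1) vac) (n - 1) (YW (B r (-1) vac) (s - 1) w))
       - \<phi> (YW (B r (-1) vac) (s - 1) (YW (A m (-1) vac) (n - 1) w))
     = of_int (n * r - m * s) * \<phi> (YW (C (m + r) (-1) vac) (n + s - 1) w)
       + (if m + r = 0 \<and> n + s = 0 then (of_int m * la + of_int n * lb) * \<phi> w else 0)"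
proof -
  define a where "a = A m (-1) vac"
  define b where "b = B r (-1) vac"
  define c where "c = C (m + r) (-1) vac"
  have Yab: "Y a j b = scV (of_int (j * r + m)) (C (m + r) (j - 2) vac)
        + scV ((if m + r = 0 \<and> j = 0 then of_int m * la else 0)
              + (if m + r = 0 \<and> j = 1 then of_int j * lb else 0)) vac" if "0 \<le> j" for j
  proof -
    have "A m j b - B r (-1) (A m j vac) = scV (of_int (j * r - m * (-1))) (C (m + r) (j + -1 - 1) vac)
        + scV ((if m + r = 0 \<and> j + -1 + 1 = 0 then of_int m * la else 0)
              + (if m + r = 0 \<and> j + -1 = 0 then of_int j * lb else 0)) vac"
      unfolding b_def by (rule com)
    moreover have "B r (-1) (A m j vac) = 0" using Avac[OF that] B0 by simp
    ultimately show ?thesis unfolding a_def YA by simp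
  qed
  have Y2: "Y a j b = 0" if "2 \<le> j" for j
    using Yab[of j] that by (simp add: Cvac scV0 scV_zero)
  have Y0: "Y a 0 b = scV (of_int m) (Y c (- int 1 - 1) vac) + scV (if m + r = 0 then of_int m * la else 0) vac"
    using Yab[of 0] unfolding c_def YC by simp
  have Y1: "Y a 1 b = scV (of_int (r + m)) c + scV (if m + r = 0 then lb else 0) vac"
    using Yab[of 1] unfolding c_def YC by (simp add: algebra_simps)
  have main: "PP a b (- n) (- s) - PP b a (- s) (- n) = XX a b (n + s - 1) 0 - of_int (- n) * XX a b (n + s - 1) 1"
    using comm_W[OF Y2, of "- n" "- s"] by (simp add: algebra_simps)
  have PPe: "PP a b (- n) (- s) = \<phi> (YW a (n - 1) (YW b (s - 1) w))" "PP b a (- s) (- n) = \<phi> (YW b (s - 1) (YW a (n - 1) w))"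
    unfolding PP_def by simp_all
  have vac: "\<phi> (YW vac (n + s - 1) w) = (if n + s = 0 then \<phi> w else 0)" by (simp add: M_vac phi0)
  have X0: "XX a b (n + s - 1) 0 = of_int m * (- (of_int (n + s - 1) + 1)) * \<phi> (YW c (n + s - 1) w)
      + (if m + r = 0 then of_int m * la else 0) * (if n + s = 0 then \<phi> w else 0)"
    unfolding XX_def Y0 XXlin Dlemma vac by simp
  have X1: "XX a b (n + s - 1) 1 = of_int (r + m) * \<phi> (YW c (n + s - 1) w)
      + (if m + r = 0 then lb else 0) * (if n + s = 0 then \<phi> w else 0)"
    unfolding XX_def Y1 XXlin vac ..
  have "\<phi> (YW a (n - 1) (YW b (s - 1) w)) - \<phi> (YW b (s - 1) (YW a (n - 1) w))
     = XX a b (n + s - 1) 0 - of_int (- n) * XX a b (n + s - 1) 1" using main PPe by simp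
  also have "\<dots> = of_int (n * r - m * s) * \<phi> (YW c (n + s - 1) w)
       + (if m + r = 0 \<and> n + s = 0 then (of_int m * la + of_int n * lb) * \<phi> w else 0)"
    unfolding X0 X1 by (auto simp: algebra_simps)
  finally show ?thesis unfolding a_def b_def c_def .
qed

end

lemma VC: "vector_space ((*) :: complex \<Rightarrow> complex \<Rightarrow> complex)"
  by unfold_locales (auto simp: algebra_simps)

lemma sep:
  fixes scW :: "complex \<Rightarrow> 'w::ab_group_add \<Rightarrow> 'w"
  assumes VS: "vector_space scW" and h: "\<And>\<phi>. Vector_Spaces.linear scW (*) \<phi> \<Longrightarrow> \<phi> x = 0"
  shows "x = 0"
proof (rule ccontr)
  assume x: "x \<noteq> 0"
  interpret vector_space_pair scW "(*) :: complex \<Rightarrow> complex \<Rightarrow> complex"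
    using VS VC by (simp add: vector_space_pair_def)
  have ind: "vs1.independent {x}" using x by simp
  obtain g where g: "Vector_Spaces.linear scW (*) g" "\<forall>y\<in>{x}. g y = (\<lambda>_. 1) y"
    using linear_independent_extend[OF ind, of "\<lambda>_. 1"] by blast
  then show False using h[OF g(1)] by simp
qed

lemma sep_eq:
  fixes scW :: "complex \<Rightarrow> 'w::ab_group_add \<Rightarrow> 'w"
  assumes VS: "vector_space scW" and h: "\<And>\<phi>. Vector_Spaces.linear scW (*) \<phi> \<Longrightarrow> \<phi> x = \<phi> y"
  shows "x = y"
proof -
  have "x - y = 0"
    by (rule sep[OF VS]) (simp add: linD(4) h)
  then show ?thesis by simp
qed

theorem theorem4p6:
  fixes scV :: "complex \<Rightarrow> 'v::ab_group_add \<Rightarrow> 'v" and vac :: 'v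
    and Y :: "'v \<Rightarrow> int \<Rightarrow> 'v \<Rightarrow> 'v"
    and T E :: "int \<Rightarrow> int \<Rightarrow> 'v \<Rightarrow> 'v"
    and l1 l2 l3 l4 :: complex
    and scW :: "complex \<Rightarrow> 'w::ab_group_add \<Rightarrow> 'w"
    and YW :: "'v \<Rightarrow> int \<Rightarrow> 'w \<Rightarrow> 'w"
  assumes "is_VLhat scV vac Y T E l1 l2 l3 l4"
    and "phi_coord_module scV vac Y scW YW"
  shows "Lstar_module scW (\<lambda>m n. YW (T m (-1) vac) (n - 1)) (\<lambda>m n. YW (E m (-1) vac) (n - 1))
           l1 l2 l3 l4
         \<and> Lstar_restricted (\<lambda>m n. YW (T m (-1) vac) (n - 1)) (\<lambda>m n. YW (E m (-1) vac) (n - 1))"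
proof -
  note H = assms(1)[unfolded is_VLhat_def]
  have VA: "vertex_algebra scV vac Y" using H by (rule conjunct1)
  have LM: "Lhat_module scV T E l1 l2 l3 l4" using H[THEN conjunct2] by (rule conjunct1)
  have IND: "induced_from_vacuum scV T E vac" using H[THEN conjunct2, THEN conjunct2] by (rule conjunct1)
  have YT: "\<And>m n. Y (T m (-1) vac) n = T m n" using H[THEN conjunct2, THEN conjunct2, THEN conjunct2, THEN conjunct1] by blast
  have YE: "\<And>m n. Y (E m (-1) vac) n = E m n" using H[THEN conjunct2, THEN conjunct2, THEN conjunct2, THEN conjunct2] by blast
  have MOD: "phi_coord_module scV vac Y scW YW" by (rule assms(2))
  note LMs = LM[unfolded Lhat_module_def]
  have linT: "\<And>m n. Vector_Spaces.linear scV scV (T m n)" using LMs[THEN conjunct1] by blast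
  have linE: "\<And>m n. Vector_Spaces.linear scV scV (E m n)" using LMs[THEN conjunct1] by blast
  have TT: "\<And>m n r s x. T m n (T r s x) - T r s (T m n x) = 0"
    using LMs[THEN conjunct2, THEN conjunct1] by blast
  have TE: "\<And>m n r s x. T m n (E r s x) - E r s (T m n x) =
        scV (of_int (n * r - m * s)) (T (m + r) (n + s - 1) x)
        + scV ((if m + r = 0 \<and> n + s + 1 = 0 then of_int m * l1 else 0)
              + (if m + r = 0 \<and> n + s = 0 then of_int n * l2 else 0)) x"
    using LMs[THEN conjunct2, THEN conjunct2, THEN conjunct1] by blast
  have EE: "\<And>m n r s x. E m n (E r s x) - E r s (E m n x) =
        scV (of_int (n * r - m * s)) (E (m + r) (n + s - 1) x)
        + scV ((if m + r = 0 \<and> n + s + 1 = 0 then of_int m * l3 else 0)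
              + (if m + r = 0 \<and> n + s = 0 then of_int n * l4 else 0)) x"
    using LMs[THEN conjunct2, THEN conjunct2, THEN conjunct2] by blast
  note INDs = IND[unfolded induced_from_vacuum_def, THEN conjunct1]
  have Tvac: "\<And>m n. 0 \<le> n \<Longrightarrow> T m n vac = 0" using INDs by blast
  have Evac: "\<And>m n. 0 \<le> n \<Longrightarrow> E m n vac = 0" using INDs by blast
  have T0: "\<And>m n. T m n 0 = 0" by (rule linD(3)[OF linT])
  have E0: "\<And>m n. E m n 0 = 0" by (rule linD(3)[OF linE])
  note MODs = MOD[unfolded phi_coord_module_def]
  have VS: "vector_space scW" using MODs by (rule conjunct1)
  have linW: "\<And>v n. Vector_Spaces.linear scW scW (YW v n)" using MODs[THEN conjunct2, THEN conjunct2, THEN conjunct1] by blast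
  have truncW: "\<And>v x. \<exists>N. \<forall>n\<ge>N. YW v n x = 0" using MODs[THEN conjunct2, THEN conjunct2, THEN conjunct2, THEN conjunct1] by blast
  define t where "t m n = YW (T m (-1) vac) (n - 1)" for m n
  define e where "e m n = YW (E m (-1) vac) (n - 1)" for m n
  have phiif: "\<phi> (if P then 0 else z) = (if P then 0 else \<phi> z)" if "Vector_Spaces.linear scW (*) \<phi>" for \<phi> P z
    using linD(3)[OF that] by simp
  have L1: "\<forall>m n. (m, n) \<noteq> (0, 0) \<longrightarrow> Vector_Spaces.linear scW scW (t m n) \<and> Vector_Spaces.linear scW scW (e m n)"
    unfolding t_def e_def using linW by blast
  have L2: "t m n (t r s x) - t r s (t m n x) = 0" for m n r s x
  proof (rule sep[OF VS])
    fix \<phi> assume lin: "Vector_Spaces.linear scW (*) \<phi>"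
    interpret vsetup scV vac Y scW YW \<phi> x by (simp add: vsetup_def VA MOD lin)
    have z: "\<And>j. 0 \<le> j \<Longrightarrow> Y (T m (-1) vac) j (T r (-1) vac) = 0"
    proof -
      fix j :: int assume j: "0 \<le> j"
      have "T m j (T r (-1) vac) = T r (-1) (T m j vac)" using TT[of m j r "-1" vac] by simp
      also have "\<dots> = 0" using Tvac[OF j] T0 by simp
      finally show "Y (T m (-1) vac) j (T r (-1) vac) = 0" unfolding YT .
    qed
    have "PP (T m (-1) vac) (T r (-1) vac) (- n) (- s) - PP (T r (-1) vac) (T m (-1) vac) (- s) (- n) = 0"
      using comm_W[of "T m (-1) vac" "T r (-1) vac" "- n" "- s"] z by (simp add: XX_def YW0' phi0)
    then show "\<phi> (t m n (t r s x) - t r s (t m n x)) = 0"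
      unfolding t_def PP_def by (simp add: linD(4)[OF lin])
  qed
  have L3: "t m n (e r s x) - e r s (t m n x) =
          scW (of_int (n * r - m * s)) (if (m + r, n + s) = (0, 0) then 0 else t (m + r) (n + s) x)
          + (if (m + r, n + s) = (0, 0) then scW (of_int m * l1 + of_int n * l2) x else 0)" for m n r s x
  proof (rule sep_eq[OF VS])
    fix \<phi> assume lin: "Vector_Spaces.linear scW (*) \<phi>"
    interpret vsetup scV vac Y scW YW \<phi> x by (simp add: vsetup_def VA MOD lin)
    have br: "\<phi> (YW (T m (-1) vac) (n - 1) (YW (E r (-1) vac) (s - 1) x))
       - \<phi> (YW (E r (-1) vac) (s - 1) (YW (T m (-1) vac) (n - 1) x))
     = of_int (n * r - m * s) * \<phi> (YW (T (m + r) (-1) vac) (n + s - 1) x)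
       + (if m + r = 0 \<and> n + s = 0 then (of_int m * l1 + of_int n * l2) * \<phi> x else 0)"
      by (rule bracket_gen[where A=T and B=E and C=T and m=m and r=r and n=n and s=s and la=l1 and lb=l2, OF YT YT TE Tvac Tvac E0])
    have z: "m + r = 0 \<and> n + s = 0 \<Longrightarrow> n * r - m * s = 0"
    proof -
      assume "m + r = 0 \<and> n + s = 0"
      then have "r = - m" "s = - n" by auto
      then show ?thesis by (simp add: algebra_simps)
    qed
    have zc: "m + r = 0 \<and> n + s = 0 \<Longrightarrow> (of_int n * of_int r :: complex) = of_int m * of_int s"
    proof -
      assume h: "m + r = 0 \<and> n + s = 0"
      have "n * r = m * s" using z[OF h] by simp
      then have "(of_int (n * r) :: complex) = of_int (m * s)" by simp
      then show ?thesis by simp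
    qed
    have dif: "\<phi> (t m n (e r s x) - e r s (t m n x)) = \<phi> (t m n (e r s x)) - \<phi> (e r s (t m n x))"
      by (rule linD(4)[OF lin])
    show "\<phi> (t m n (e r s x) - e r s (t m n x)) = \<phi> (scW (of_int (n * r - m * s)) (if (m + r, n + s) = (0, 0) then 0 else t (m + r) (n + s) x)
          + (if (m + r, n + s) = (0, 0) then scW (of_int m * l1 + of_int n * l2) x else 0))"
    proof (cases "(m + r, n + s) = (0, 0)")
      case True
      then have c: "m + r = 0 \<and> n + s = 0" by simp
      have "\<phi> (scW (of_int (n * r - m * s)) (if (m + r, n + s) = (0, 0) then 0 else t (m + r) (n + s) x)
          + (if (m + r, n + s) = (0, 0) then scW (of_int m * l1 + of_int n * l2) x else 0))
          = (of_int m * l1 + of_int n * l2) * \<phi> x"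
      proof -
        have cf2: "((m + r, n + s) = (0, 0)) = True" using True by simp
        show ?thesis unfolding cf2 if_True by (simp add: linD(1,2,3)[OF lin])
      qed
      moreover have "\<phi> (t m n (e r s x)) - \<phi> (e r s (t m n x)) = (of_int m * l1 + of_int n * l2) * \<phi> x"
      proof -
        have cf: "(m + r = 0 \<and> n + s = 0) = True" using c by simp
        have z0: "(of_int (n * r - m * s) :: complex) = 0" using z[OF c] by simp
        show ?thesis unfolding t_def e_def br cf if_True z0 by simp
      qed
      ultimately show ?thesis using dif by simp
    next
      case False
      then have c: "\<not> (m + r = 0 \<and> n + s = 0)" by simp
      have "\<phi> (scW (of_int (n * r - m * s)) (if (m + r, n + s) = (0, 0) then 0 else t (m + r) (n + s) x)
          + (if (m + r, n + s) = (0, 0) then scW (of_int m * l1 + of_int n * l2) x else 0))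
          = of_int (n * r - m * s) * \<phi> (YW (T (m + r) (-1) vac) (n + s - 1) x)"
      proof -
        have cf2: "((m + r, n + s) = (0, 0)) = False" using False by simp
        show ?thesis unfolding t_def e_def cf2 if_False by (simp add: linD(1,2,3)[OF lin])
      qed
      moreover have "\<phi> (t m n (e r s x)) - \<phi> (e r s (t m n x)) = of_int (n * r - m * s) * \<phi> (YW (T (m + r) (-1) vac) (n + s - 1) x)"
      proof -
        have cf: "(m + r = 0 \<and> n + s = 0) = False" using c by simp
        show ?thesis unfolding t_def e_def br cf if_False by simp
      qed
      ultimately show ?thesis using dif by simp
    qed
  qed
  have L4: "e m n (e r s x) - e r s (e m n x) =
          scW (of_int (n * r - m * s)) (if (m + r, n + s) = (0, 0) then 0 else e (m + r) (n + s) x)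
          + (if (m + r, n + s) = (0, 0) then scW (of_int m * l3 + of_int n * l4) x else 0)" for m n r s x
  proof (rule sep_eq[OF VS])
    fix \<phi> assume lin: "Vector_Spaces.linear scW (*) \<phi>"
    interpret vsetup scV vac Y scW YW \<phi> x by (simp add: vsetup_def VA MOD lin)
    have br: "\<phi> (YW (E m (-1) vac) (n - 1) (YW (E r (-1) vac) (s - 1) x))
       - \<phi> (YW (E r (-1) vac) (s - 1) (YW (E m (-1) vac) (n - 1) x))
     = of_int (n * r - m * s) * \<phi> (YW (E (m + r) (-1) vac) (n + s - 1) x)
       + (if m + r = 0 \<and> n + s = 0 then (of_int m * l3 + of_int n * l4) * \<phi> x else 0)"
      by (rule bracket_gen[where A=E and B=E and C=E and m=m and r=r and n=n and s=s and la=l3 and lb=l4, OF YE YE EE Evac Evac E0])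
    have z: "m + r = 0 \<and> n + s = 0 \<Longrightarrow> n * r - m * s = 0"
    proof -
      assume "m + r = 0 \<and> n + s = 0"
      then have "r = - m" "s = - n" by auto
      then show ?thesis by (simp add: algebra_simps)
    qed
    have zc: "m + r = 0 \<and> n + s = 0 \<Longrightarrow> (of_int n * of_int r :: complex) = of_int m * of_int s"
    proof -
      assume h: "m + r = 0 \<and> n + s = 0"
      have "n * r = m * s" using z[OF h] by simp
      then have "(of_int (n * r) :: complex) = of_int (m * s)" by simp
      then show ?thesis by simp
    qed
    have dif: "\<phi> (e m n (e r s x) - e r s (e m n x)) = \<phi> (e m n (e r s x)) - \<phi> (e r s (e m n x))"
      by (rule linD(4)[OF lin])
    show "\<phi> (e m n (e r s x) - e r s (e m n x)) = \<phi> (scW (of_int (n * r - m * s)) (if (m + r, n + s) = (0, 0) then 0 else e (m + r) (n + s) x)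
          + (if (m + r, n + s) = (0, 0) then scW (of_int m * l3 + of_int n * l4) x else 0))"
    proof (cases "(m + r, n + s) = (0, 0)")
      case True
      then have c: "m + r = 0 \<and> n + s = 0" by simp
      have "\<phi> (scW (of_int (n * r - m * s)) (if (m + r, n + s) = (0, 0) then 0 else e (m + r) (n + s) x)
          + (if (m + r, n + s) = (0, 0) then scW (of_int m * l3 + of_int n * l4) x else 0))
          = (of_int m * l3 + of_int n * l4) * \<phi> x"
      proof -
        have cf2: "((m + r, n + s) = (0, 0)) = True" using True by simp
        show ?thesis unfolding cf2 if_True by (simp add: linD(1,2,3)[OF lin])
      qed
      moreover have "\<phi> (e m n (e r s x)) - \<phi> (e r s (e m n x)) = (of_int m * l3 + of_int n * l4) * \<phi> x"
      proof -
        have cf: "(m + r = 0 \<and> n + s = 0) = True" using c by simp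
        have z0: "(of_int (n * r - m * s) :: complex) = 0" using z[OF c] by simp
        show ?thesis unfolding t_def e_def br cf if_True z0 by simp
      qed
      ultimately show ?thesis using dif by simp
    next
      case False
      then have c: "\<not> (m + r = 0 \<and> n + s = 0)" by simp
      have "\<phi> (scW (of_int (n * r - m * s)) (if (m + r, n + s) = (0, 0) then 0 else e (m + r) (n + s) x)
          + (if (m + r, n + s) = (0, 0) then scW (of_int m * l3 + of_int n * l4) x else 0))
          = of_int (n * r - m * s) * \<phi> (YW (E (m + r) (-1) vac) (n + s - 1) x)"
      proof -
        have cf2: "((m + r, n + s) = (0, 0)) = False" using False by simp
        show ?thesis unfolding t_def e_def cf2 if_False by (simp add: linD(1,2,3)[OF lin])
      qed
      moreover have "\<phi> (e m n (e r s x)) - \<phi> (e r s (e m n x)) = of_int (n * r - m * s) * \<phi> (YW (E (m + r) (-1) vac) (n + s - 1) x)"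
      proof -
        have cf: "(m + r = 0 \<and> n + s = 0) = False" using c by simp
        show ?thesis unfolding t_def e_def br cf if_False by simp
      qed
      ultimately show ?thesis using dif by simp
    qed
  qed
  have RS: "Lstar_restricted t e"
    unfolding Lstar_restricted_def
  proof (intro allI)
    fix m x
    obtain N1 where N1: "\<forall>n\<ge>N1. YW (T m (-1) vac) n x = 0" using truncW by blast
    obtain N2 where N2: "\<forall>n\<ge>N2. YW (E m (-1) vac) n x = 0" using truncW by blast
    show "\<exists>N. \<forall>n\<ge>N. (m, n) \<noteq> (0, 0) \<longrightarrow> t m n x = 0 \<and> e m n x = 0"
      by (rule exI[of _ "max N1 N2 + 1"]) (auto simp: t_def e_def N1 N2)
  qed
  have LMod: "Lstar_module scW t e l1 l2 l3 l4"
    unfolding Lstar_module_def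
    apply (intro conjI)
    subgoal by (rule L1)
    subgoal by (intro allI impI) (rule L2)
    subgoal by (intro allI impI) (rule L3)
    subgoal by (intro allI impI) (rule L4)
    done
  have eqt: "(\<lambda>m n. YW (T m (-1) vac) (n - 1)) = t" by (intro ext) (simp only: t_def)
  have eqe: "(\<lambda>m n. YW (E m (-1) vac) (n - 1)) = e" by (intro ext) (simp only: e_def)
  show ?thesis unfolding eqt eqe using LMod RS by (rule conjI)
qed

end
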